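(* Let $(G_n)_{n\ge 1}$ be a sequence of finite groups such that $\lim_{n \to \infty} |G_n| = \infty$. For all $n$, let $C_n = \sqrt{ \Theta(G_n)\, |G_n| \log |G_n| }$. Then for any $\varepsilon > 0$, $$ \lim_{n \to \infty} P(G_n, \lceil (1+\varepsilon) C_n \rceil ) = 1 \quad\text{and}\quad \lim_{n \to \infty} P(G_n, \lfloor (1-\varepsilon) C_n \rfloor ) = 0 . $$
   Context: All logarithms are natural. For a finite group $G$ and $x\in G$, $C(x)=\{g\in G: gx=xg\}$ is the centralizer of $x$. For a finite group $G$ of order $n\ge 2$, $\Theta(G)$ is defined as the unique number $\xi\in[1/2,1]$ satisfying $$ 2 \xi \log n = \log \sum_{x \in G} \exp \Big( \xi \log n \cdot \frac{|C(x)|}{n} \Big) $$ (the function $\xi\mapsto 2\xi\log n-\log\sum_{x}\exp(\xi\log n\,|C(x)|/n)$ is continuous, strictly increasing on $[1/2,1]$, negative at $1/2$ and nonnegative at $1$). For a finite group $G$ and a positive integer $k$, let $a_1,\dots,a_k,b_1,\dots,b_k$ be $2k$ independent uniformly random elements of $G$ (repetitions allowed), $A=\{a_1,\dots,a_k\}$, $B=\{b_1,\dots,b_k\}$, and $AB=\{ab: a\in A, b\in B\}$. Define $P(G,k)=\Pr[AB\cup BA=G]$. *)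

theory Defs
  imports "HOL-Analysis.Analysis" "HOL-Algebra.Group"
begin

definition centr :: "('a, 'b) monoid_scheme \<Rightarrow> 'a \<Rightarrow> 'a set" where
  "centr G x = {g \<in> carrier G. g \<otimes>\<^bsub>G\<^esub> x = x \<otimes>\<^bsub>G\<^esub> g}"

definition Theta :: "('a, 'b) monoid_scheme \<Rightarrow> real" where
  "Theta G = (let n = real (card (carrier G)) in
     THE \<xi>. \<xi> \<in> {1/2..1} \<and>
        2 * \<xi> * ln n = ln (\<Sum>x\<in>carrier G. exp (\<xi> * ln n * real (card (centr G x)) / n)))"

definition setprod :: "('a, 'b) monoid_scheme \<Rightarrow> 'a set \<Rightarrow> 'a set \<Rightarrow> 'a set" where
  "setprod G A B = {a \<otimes>\<^bsub>G\<^esub> b | a b. a \<in> A \<and> b \<in> B}"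

text \<open>Uniform probability
  is realised as counting over all (|G|^k)^2 tuples.\<close>
definition Pcov :: "('a, 'b) monoid_scheme \<Rightarrow> nat \<Rightarrow> real" where
  "Pcov G k = real (card {(a, b). a \<in> {..<k} \<rightarrow>\<^sub>E carrier G \<and> b \<in> {..<k} \<rightarrow>\<^sub>E carrier G \<and>
        setprod G (a ` {..<k}) (b ` {..<k}) \<union> setprod G (b ` {..<k}) (a ` {..<k}) = carrier G})
     / real (card (carrier G)) ^ (2 * k)"

end

theory Submission
  imports Defs "HOL-Algebra.Coset" "HOL-Real_Asymp.Real_Asymp"
begin

locale fgrp = group +
  assumes fin: "finite (carrier G)"
begin

lemma fin_simp[simp]: "finite (carrier G)" by (rule fin)

lemma carrier_ne[simp]: "carrier G \<noteq> {}" using one_closed by blast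

abbreviation nG where "nG \<equiv> card (carrier G)"

definition GK :: "nat \<Rightarrow> (nat \<Rightarrow> 'a) set" where "GK k = {..<k} \<rightarrow>\<^sub>E carrier G"

lemma fin_GK[simp]: "finite (GK k)"
  unfolding GK_def using fin by (auto intro: finite_PiE)

lemma card_GK: "card (GK k) = nG ^ k"
  unfolding GK_def by (simp add: card_PiE)

lemma nG_pos: "nG > 0"
  using fin by (metis card_gt_0_iff one_closed empty_iff)

lemma GK_in: "a \<in> GK k \<Longrightarrow> j < k \<Longrightarrow> a j \<in> carrier G"
  unfolding GK_def by auto

lemma GK_img: "a \<in> GK k \<Longrightarrow> a ` {..<k} \<subseteq> carrier G"
  using GK_in by auto

lemma count_avoid:
  assumes "S \<subseteq> carrier G"
  shows "(\<Sum>b\<in>GK k. of_bool (\<forall>j<k. b j \<notin> S) :: real) = (real nG - card S) ^ k"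
proof -
  have "GK k \<inter> {b. \<forall>j<k. b j \<notin> S} = {..<k} \<rightarrow>\<^sub>E (carrier G - S)"
    unfolding GK_def by auto
  moreover have "card ({..<k} \<rightarrow>\<^sub>E (carrier G - S)) = (nG - card S) ^ k"
    by (simp add: card_PiE card_Diff_subset assms finite_subset[OF assms fin])
  moreover have "card S \<le> nG" using assms fin card_mono by blast
  ultimately show ?thesis by (simp add: of_nat_diff)
qed

definition Sg :: "'a \<Rightarrow> 'a set \<Rightarrow> 'a set" where
  "Sg g A = (\<lambda>x. inv x \<otimes> g) ` A \<union> (\<lambda>x. g \<otimes> inv x) ` A"

lemma Sg_sub: "g \<in> carrier G \<Longrightarrow> A \<subseteq> carrier G \<Longrightarrow> Sg g A \<subseteq> carrier G"
  unfolding Sg_def by auto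

lemma fin_Sg: "finite A \<Longrightarrow> finite (Sg g A)"
  unfolding Sg_def by auto

definition unc :: "nat \<Rightarrow> (nat \<Rightarrow> 'a) \<Rightarrow> (nat \<Rightarrow> 'a) \<Rightarrow> 'a \<Rightarrow> bool" where
  "unc k a b g \<longleftrightarrow> g \<notin> setprod G (a ` {..<k}) (b ` {..<k}) \<union> setprod G (b ` {..<k}) (a ` {..<k})"

lemma setprod_sub: "A \<subseteq> carrier G \<Longrightarrow> B \<subseteq> carrier G \<Longrightarrow> setprod G A B \<subseteq> carrier G"
  unfolding setprod_def by auto

lemma cover_iff:
  assumes "a \<in> GK k" "b \<in> GK k"
  shows "(setprod G (a ` {..<k}) (b ` {..<k}) \<union> setprod G (b ` {..<k}) (a ` {..<k}) = carrier G)
     \<longleftrightarrow> (\<forall>g\<in>carrier G. \<not> unc k a b g)"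
  using setprod_sub[OF GK_img[OF assms(1)] GK_img[OF assms(2)]]
     setprod_sub[OF GK_img[OF assms(2)] GK_img[OF assms(1)]]
  unfolding unc_def by blast

lemma unc_iff:
  assumes "a \<in> GK k" "b \<in> GK k" "g \<in> carrier G"
  shows "unc k a b g \<longleftrightarrow> (\<forall>j<k. b j \<notin> Sg g (a ` {..<k}))"
proof -
  have "(\<exists>j<k. b j \<in> Sg g (a ` {..<k})) \<longleftrightarrow> \<not> unc k a b g"
  proof
    assume "\<exists>j<k. b j \<in> Sg g (a ` {..<k})"
    then obtain j i where ji: "j < k" "i < k" "b j = inv (a i) \<otimes> g \<or> b j = g \<otimes> inv (a i)"
      unfolding Sg_def by auto
    have aC: "a i \<in> carrier G" and bC: "b j \<in> carrier G" using GK_in assms ji by auto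
    from ji(3) show "\<not> unc k a b g"
    proof
      assume "b j = inv (a i) \<otimes> g"
      then have "g = a i \<otimes> b j" using inv_solve_left aC bC assms(3) by blast
      then show ?thesis unfolding unc_def setprod_def using ji by blast
    next
      assume "b j = g \<otimes> inv (a i)"
      then have "g = b j \<otimes> a i" using inv_solve_right aC bC assms(3) by blast
      then show ?thesis unfolding unc_def setprod_def using ji by blast
    qed
  next
    assume "\<not> unc k a b g"
    then obtain i j where ji: "i < k" "j < k" "g = a i \<otimes> b j \<or> g = b j \<otimes> a i"
      unfolding unc_def setprod_def by blast
    have aC: "a i \<in> carrier G" and bC: "b j \<in> carrier G" using GK_in assms ji by auto
    from ji(3) have "b j = inv (a i) \<otimes> g \<or> b j = g \<otimes> inv (a i)"
      using inv_solve_left[OF bC aC assms(3)] inv_solve_right[OF bC assms(3) aC] by blast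
    then show "\<exists>j<k. b j \<in> Sg g (a ` {..<k})" unfolding Sg_def using ji by blast
  qed
  then show ?thesis by blast
qed

lemma card_pairs_sum:
  "real (card {(a, b). a \<in> X \<and> b \<in> Y \<and> P a b}) = (\<Sum>a\<in>X. \<Sum>b\<in>Y. of_bool (P a b))"
  if "finite X" "finite Y"
proof -
  have "{(a, b). a \<in> X \<and> b \<in> Y \<and> P a b} = Sigma X (\<lambda>a. {b\<in>Y. P a b})" by auto
  then have "card {(a, b). a \<in> X \<and> b \<in> Y \<and> P a b} = (\<Sum>a\<in>X. card {b\<in>Y. P a b})"
    using that by (simp add: card_SigmaI)
  then show ?thesis using that by (simp add: Int_def)
qed

lemma Pcov_sum:
  "Pcov G k = (\<Sum>a\<in>GK k. \<Sum>b\<in>GK k. of_bool (\<forall>g\<in>carrier G. \<not> unc k a b g)) / real nG ^ (2*k)"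
proof -
  have "Pcov G k = (\<Sum>a\<in>GK k. \<Sum>b\<in>GK k. of_bool (setprod G (a ` {..<k}) (b ` {..<k}) \<union> setprod G (b ` {..<k}) (a ` {..<k}) = carrier G)) / real nG ^ (2*k)"
    unfolding Pcov_def GK_def[symmetric] by (subst card_pairs_sum) auto
  also have "\<dots> = (\<Sum>a\<in>GK k. \<Sum>b\<in>GK k. of_bool (\<forall>g\<in>carrier G. \<not> unc k a b g)) / real nG ^ (2*k)"
    by (intro arg_cong2[where f="(/)"] sum.cong refl) (simp add: cover_iff)
  finally show ?thesis .
qed

lemma sum_b_unc:
  assumes "a \<in> GK k" "g \<in> carrier G"
  shows "(\<Sum>b\<in>GK k. of_bool (unc k a b g) :: real) = (real nG - card (Sg g (a ` {..<k}))) ^ k"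
proof -
  have "(\<Sum>b\<in>GK k. of_bool (unc k a b g) :: real) = (\<Sum>b\<in>GK k. of_bool (\<forall>j<k. b j \<notin> Sg g (a ` {..<k})))"
    by (intro sum.cong refl) (simp add: unc_iff assms)
  also have "\<dots> = (real nG - card (Sg g (a ` {..<k}))) ^ k" by (rule count_avoid[OF Sg_sub[OF assms(2) GK_img[OF assms(1)]]])
  finally show ?thesis .
qed

lemma sum_b_unc2:
  assumes "a \<in> GK k" "g \<in> carrier G" "h \<in> carrier G"
  shows "(\<Sum>b\<in>GK k. of_bool (unc k a b g) * of_bool (unc k a b h) :: real)
       = (real nG - card (Sg g (a ` {..<k}) \<union> Sg h (a ` {..<k}))) ^ k"
proof -
  have "(\<Sum>b\<in>GK k. of_bool (unc k a b g) * of_bool (unc k a b h) :: real)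
     = (\<Sum>b\<in>GK k. of_bool (\<forall>j<k. b j \<notin> Sg g (a ` {..<k}) \<union> Sg h (a ` {..<k})))"
    by (intro sum.cong refl) (auto simp add: unc_iff assms)
  also have "\<dots> = (real nG - card (Sg g (a ` {..<k}) \<union> Sg h (a ` {..<k}))) ^ k" by (rule count_avoid) (use Sg_sub[OF _ GK_img[OF assms(1)]] assms in auto)
  finally show ?thesis .
qed

end

lemma exp_convex_bound:
  fixes z M t :: real
  assumes "0 \<le> z" "z \<le> M" "0 < M" "0 \<le> t"
  shows "exp (t*z) \<le> 1 + z * (exp (t*M) - 1) / M"
proof -
  have "exp ((1 - z/M) *\<^sub>R 0 + (z/M) *\<^sub>R (t*M)) \<le> (1 - z/M) * exp 0 + (z/M) * exp (t*M)"
    by (rule convex_onD[OF exp_convex]) (use assms in auto)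
  moreover have "(1 - z/M) *\<^sub>R 0 + (z/M) *\<^sub>R (t*M) = t*z" using assms by simp
  ultimately have "exp (t*z) \<le> (1 - z/M) + (z/M) * exp (t*M)" by simp
  also have "\<dots> = 1 + z * (exp (t*M) - 1) / M" using assms by (simp add: field_simps)
  finally show ?thesis .
qed

lemma pairs_fin: "finite {(j,l). j<l \<and> l<(m::nat)}"
  by (rule finite_subset[of _ "{..<m} \<times> {..<m}"]) auto

lemma pairs_card: "card {(j,l). j<l \<and> l<(m::nat)} \<le> m*m"
proof -
  have "card {(j,l). j<l \<and> l<(m::nat)} \<le> card ({..<m} \<times> {..<m})"
    by (rule card_mono) auto
  then show ?thesis by (simp add: card_cartesian_product)
qed

lemma pairs_Suc: "{(j,l). j<l \<and> l<Suc m} = {(j,l). j<l \<and> l<m} \<union> (\<lambda>j. (j,m)) ` {..<m}"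
  by auto

lemma card_img_ge:
  fixes h :: "nat \<Rightarrow> 'b"
  shows "real (card (h ` {..<m})) \<ge> real m - (\<Sum>p\<in>{(j,l). j<l \<and> l<m}. of_bool (h (fst p) = h (snd p)))"
proof (induction m)
  case 0
  then show ?case by simp
next
  case (Suc m)
  have disj: "{(j,l). j<l \<and> l<m} \<inter> (\<lambda>j. (j,m)) ` {..<m} = {}" by auto
  have "(\<Sum>p\<in>{(j,l). j<l \<and> l<Suc m}. of_bool (h (fst p) = h (snd p)) :: real)
      = (\<Sum>p\<in>{(j,l). j<l \<and> l<m}. of_bool (h (fst p) = h (snd p))) + (\<Sum>p\<in>(\<lambda>j. (j,m)) ` {..<m}. of_bool (h (fst p) = h (snd p)))"
    unfolding pairs_Suc by (rule sum.union_disjoint[OF pairs_fin _ disj]) auto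
  also have "(\<Sum>p\<in>(\<lambda>j. (j,m)) ` {..<m}. of_bool (h (fst p) = h (snd p)) :: real) = (\<Sum>j<m. of_bool (h j = h m))"
    by (subst sum.reindex) (auto simp: inj_on_def)
  finally have eq: "(\<Sum>p\<in>{(j,l). j<l \<and> l<Suc m}. of_bool (h (fst p) = h (snd p)) :: real)
      = (\<Sum>p\<in>{(j,l). j<l \<and> l<m}. of_bool (h (fst p) = h (snd p))) + (\<Sum>j<m. of_bool (h j = h m))" .
  have img: "h ` {..<Suc m} = insert (h m) (h ` {..<m})" by (auto simp: lessThan_Suc)
  show ?case
  proof (cases "h m \<in> h ` {..<m}")
    case True
    then obtain j where j: "j < m" "h j = h m" by auto
    have "(1::real) \<le> (\<Sum>j<m. of_bool (h j = h m))"
      using member_le_sum[of j "{..<m}" "\<lambda>j. of_bool (h j = h m) :: real"] j by auto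
    then show ?thesis using Suc.IH True unfolding eq img by (simp add: insert_absorb)
  next
    case False
    have "(0::real) \<le> (\<Sum>j<m. of_bool (h j = h m))" by (rule sum_nonneg) auto
    then show ?thesis using Suc.IH False unfolding eq img by simp
  qed
qed

context fgrp begin

lemma step_bound:
  fixes f :: "nat \<Rightarrow> 'a \<Rightarrow> 'a" and m :: nat and t s0 :: real and S :: "'a set"
  assumes inj: "\<And>j. j < m \<Longrightarrow> inj_on (f j) (carrier G)"
    and m: "m \<ge> 1" and t: "t \<ge> 0" and S: "finite S" "real (card S) \<le> s0"
  shows "(\<Sum>y\<in>carrier G. exp (- t * card (S \<union> (\<lambda>j. f j y) ` {..<m})))
     \<le> exp (- t * card S) * nG * exp (- t*m + (exp (t*real (m*m+m)) - 1)/real (m*m+m) *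
          ((\<Sum>p\<in>{(j,l). j<l \<and> l<m}. real (card {x\<in>carrier G. f (fst p) x = f (snd p) x}))/nG + m* s0/nG))"
proof -
  define M where "M = real (m*m+m)"
  define P where "P = {(j,l). j<l \<and> l<m}"
  define Nc where "Nc = (\<Sum>p\<in>P. real (card {x\<in>carrier G. f (fst p) x = f (snd p) x}))"
  define \<gamma> where "\<gamma> = (exp (t*M) - 1)/M"
  define D where "D y = (\<Sum>p\<in>P. of_bool (f (fst p) y = f (snd p) y) :: real)" for y
  define Z where "Z y = D y + (\<Sum>j<m. of_bool (f j y \<in> S) :: real)" for y
  have "0 < m*m+m" using m by simp
  then have Mpos: "M > 0" unfolding M_def by (simp only: of_nat_0_less_iff)
  have \<gamma>0: "\<gamma> \<ge> 0" unfolding \<gamma>_def using Mpos t by (simp add: divide_nonneg_pos)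
  have finP: "finite P" unfolding P_def by (rule pairs_fin)
  have point: "exp (- t * card (S \<union> (\<lambda>j. f j y) ` {..<m})) \<le> exp (- t * card S) * exp (- t*m) * (1 + Z y * \<gamma>)"
    if y: "y \<in> carrier G" for y
  proof -
    define T where "T = (\<lambda>j. f j y) ` {..<m}"
    have finT: "finite T" unfolding T_def by auto
    have c1: "card (S \<union> T) = card S + card (T - S)"
      using S finT by (metis Un_Diff_cancel card_Un_disjoint Diff_disjoint Int_commute finite_Diff)
    have c2: "card T = card (T - S) + card (T \<inter> S)"
      using finT by (metis Diff_Diff_Int card_Diff_subset_Int finite_Int inf.cobounded1 card_mono add.commute le_add_diff_inverse card_Int_Diff finite_Diff)
    have "T \<inter> S = (\<lambda>j. f j y) ` {j\<in>{..<m}. f j y \<in> S}" unfolding T_def by auto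
    then have c3: "card (T \<inter> S) \<le> card {j\<in>{..<m}. f j y \<in> S}"
      using card_image_le[of "{j\<in>{..<m}. f j y \<in> S}" "\<lambda>j. f j y"] by simp
    have c3': "real (card {j\<in>{..<m}. f j y \<in> S}) = (\<Sum>j<m. of_bool (f j y \<in> S))"
      by (simp add: Int_def)
    have c4: "real (card T) \<ge> real m - D y" unfolding T_def D_def P_def by (rule card_img_ge)
    have cardge: "real (card (S \<union> T)) \<ge> real (card S) + m - Z y"
      using c1 c2 c3 c3' c4 unfolding Z_def by linarith
    have Z0: "0 \<le> Z y" unfolding Z_def D_def by (intro add_nonneg_nonneg sum_nonneg) auto
    have "D y \<le> (\<Sum>p\<in>P. 1)" unfolding D_def by (rule sum_mono) auto
    also have "\<dots> \<le> real (m*m)" using pairs_card[of m] unfolding P_def by (simp only: sum_constant mult_1_right of_nat_le_iff)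
    finally have "D y \<le> real (m*m)" .
    moreover have "(\<Sum>j<m. of_bool (f j y \<in> S) :: real) \<le> (\<Sum>j<m. 1)" by (rule sum_mono) auto
    ultimately have ZM: "Z y \<le> M" unfolding Z_def M_def by simp
    have "exp (- t * card (S \<union> T)) \<le> exp (- t * (card S + m - Z y))"
      using cardge t by (simp add: mult_left_mono)
    also have "\<dots> = exp (- t * card S) * exp (- t*m) * exp (t * Z y)"
      by (simp add: exp_add[symmetric] exp_diff algebra_simps)
    also have "\<dots> \<le> exp (- t * card S) * exp (- t*m) * (1 + Z y * \<gamma>)"
      using exp_convex_bound[OF Z0 ZM Mpos t] unfolding \<gamma>_def
      by (intro mult_left_mono) (auto simp: mult.commute)
    finally show ?thesis unfolding T_def .
  qed
  have sumD: "(\<Sum>y\<in>carrier G. D y) = Nc"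
    unfolding D_def Nc_def by (subst sum.swap) (simp add: Int_def)
  have sumS: "(\<Sum>y\<in>carrier G. \<Sum>j<m. of_bool (f j y \<in> S) :: real) \<le> m * s0"
  proof -
    have "(\<Sum>y\<in>carrier G. \<Sum>j<m. of_bool (f j y \<in> S) :: real) = (\<Sum>j<m. real (card {y\<in>carrier G. f j y \<in> S}))"
      by (subst sum.swap) (simp add: Int_def)
    also have "\<dots> \<le> (\<Sum>j<m. s0)"
    proof (rule sum_mono)
      fix j assume "j \<in> {..<m}"
      then have "inj_on (f j) {y\<in>carrier G. f j y \<in> S}" using inj by (auto intro: inj_on_subset)
      then have "card {y\<in>carrier G. f j y \<in> S} \<le> card S"
        using S by (intro card_inj_on_le) auto
      then show "real (card {y\<in>carrier G. f j y \<in> S}) \<le> s0" using S by linarith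
    qed
    finally show ?thesis by simp
  qed
  have "(\<Sum>y\<in>carrier G. exp (- t * card (S \<union> (\<lambda>j. f j y) ` {..<m})))
      \<le> (\<Sum>y\<in>carrier G. exp (- t * card S) * exp (- t*m) * (1 + Z y * \<gamma>))"
    by (rule sum_mono) (rule point)
  also have "\<dots> = exp (- t * card S) * exp (- t*m) * (nG + \<gamma> * (\<Sum>y\<in>carrier G. Z y))"
    by (simp add: sum.distrib sum_distrib_left sum_distrib_right algebra_simps)
  also have "(\<Sum>y\<in>carrier G. Z y) = Nc + (\<Sum>y\<in>carrier G. \<Sum>j<m. of_bool (f j y \<in> S))"
    unfolding Z_def by (simp add: sum.distrib sumD)
  also have "exp (- t * card S) * exp (- t*m) * (nG + \<gamma> * (Nc + (\<Sum>y\<in>carrier G. \<Sum>j<m. of_bool (f j y \<in> S))))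
      \<le> exp (- t * card S) * exp (- t*m) * (nG + \<gamma> * (Nc + m * s0))"
    using sumS \<gamma>0 by (intro mult_left_mono add_left_mono) auto
  also have "\<dots> = exp (- t * card S) * nG * (exp (- t*m) * (1 + \<gamma> * (Nc/nG + m* s0/nG)))"
    using nG_pos by (simp add: field_simps)
  also have "\<dots> \<le> exp (- t * card S) * nG * (exp (- t*m) * exp (\<gamma> * (Nc/nG + m* s0/nG)))"
    by (intro mult_left_mono) auto
  also have "\<dots> = exp (- t * card S) * nG * exp (- t*m + \<gamma> * (Nc/nG + m* s0/nG))"
    by (simp only: exp_add)
  finally show ?thesis unfolding \<gamma>_def M_def Nc_def P_def .
qed

end

lemma P4: "{(j,l). j<l \<and> l<(4::nat)} = {(0,1),(0,2),(0,3),(1,2),(1,3),(2,3)}"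
  by (auto simp: less_Suc_eq numeral_eq_Suc)

lemma P2: "{(j,l). j<l \<and> l<(2::nat)} = {(0,1)}"
  by (auto simp: less_Suc_eq numeral_eq_Suc)

context fgrp begin

lemma moment_bound:
  fixes f :: "nat \<Rightarrow> 'a \<Rightarrow> 'a" and m K :: nat and t :: real
  assumes inj: "\<And>j. j < m \<Longrightarrow> inj_on (f j) (carrier G)"
    and m: "m \<ge> 1" and t: "t \<ge> 0"
  defines "W \<equiv> - t*m + (exp (t*real (m*m+m)) - 1)/real (m*m+m) *
          ((\<Sum>p\<in>{(j,l). j<l \<and> l<m}. real (card {x\<in>carrier G. f (fst p) x = f (snd p) x}))/nG + m * (m*K)/nG)"
  shows "k \<le> K \<Longrightarrow> (\<Sum>a\<in>GK k. exp (- t * card (\<Union>i<k. (\<lambda>j. f j (a i)) ` {..<m}))) \<le> real nG ^ k * exp (k * W)"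
proof (induction k)
  case 0
  then show ?case by (simp add: GK_def)
next
  case (Suc k)
  define T where "T y = (\<lambda>j. f j y) ` {..<m}" for y
  define S where "S a = (\<Union>i<k. T (a i))" for a
  have GKS: "GK (Suc k) = (\<lambda>(y, g). g(k := y)) ` (carrier G \<times> GK k)"
    unfolding GK_def lessThan_Suc by (rule PiE_insert_eq)
  have inj2: "inj_on (\<lambda>(y, g). g(k := y)) (carrier G \<times> GK k)"
    unfolding GK_def by (rule inj_combinator) simp
  have U: "(\<Union>i<Suc k. T ((g(k := y)) i)) = S g \<union> T y" for g y
    unfolding S_def lessThan_Suc by auto
  have cardS: "real (card (S g)) \<le> real (m*K)" for g
  proof -
    have "card (S g) \<le> (\<Sum>i<k. card (T (g i)))" unfolding S_def by (rule card_UN_le) simp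
    also have "\<dots> \<le> (\<Sum>i<k. m)" unfolding T_def by (intro sum_mono) (metis card_image_le card_lessThan finite_lessThan)
    also have "\<dots> \<le> m*K" using Suc.prems by simp
    finally show ?thesis by linarith
  qed
  have "(\<Sum>a\<in>GK (Suc k). exp (- t * card (\<Union>i<Suc k. T (a i))))
      = (\<Sum>p\<in>carrier G \<times> GK k. exp (- t * card (\<Union>i<Suc k. T (fun_upd (snd p) k (fst p) i))))"
    unfolding GKS by (subst sum.reindex[OF inj2]) (simp add: case_prod_beta)
  also have "\<dots> = (\<Sum>(y,g)\<in>carrier G \<times> GK k. exp (- t * card (S g \<union> T y)))"
    by (rule sum.cong) (auto simp del: fun_upd_apply simp: U)
  also have "\<dots> = (\<Sum>y\<in>carrier G. \<Sum>g\<in>GK k. exp (- t * card (S g \<union> T y)))"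
    by (rule sum.cartesian_product[symmetric])
  also have "\<dots> = (\<Sum>g\<in>GK k. \<Sum>y\<in>carrier G. exp (- t * card (S g \<union> T y)))"
    by (rule sum.swap)
  also have "\<dots> \<le> (\<Sum>g\<in>GK k. exp (- t * card (S g)) * nG * exp W)"
  proof (rule sum_mono)
    fix g assume "g \<in> GK k"
    have "finite (S g)" unfolding S_def T_def by auto
    from step_bound[OF inj m t this cardS[of g]]
    show "(\<Sum>y\<in>carrier G. exp (- t * card (S g \<union> T y))) \<le> exp (- t * card (S g)) * nG * exp W"
      unfolding W_def T_def by (simp add: mult.assoc)
  qed
  also have "\<dots> = (\<Sum>g\<in>GK k. exp (- t * card (S g))) * (nG * exp W)"
    by (simp add: sum_distrib_right mult.assoc)
  also have "\<dots> \<le> (real nG ^ k * exp (k * W)) * (nG * exp W)"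
    using Suc by (intro mult_right_mono) (auto simp: S_def T_def)
  also have "\<dots> = real nG ^ Suc k * exp (Suc k * W)"
    by (simp add: exp_add[symmetric] algebra_simps)
  finally show ?case unfolding T_def .
qed

definition cnt where "cnt g = card (centr G g)"
definition E1 where "E1 g h = card {x\<in>carrier G. inv x \<otimes> g = h \<otimes> inv x}"
definition E2 where "E2 g h = card {x\<in>carrier G. g \<otimes> inv x = inv x \<otimes> h}"

lemma inv_comm_iff:
  assumes "x \<in> carrier G" "g \<in> carrier G"
  shows "inv x \<otimes> g = g \<otimes> inv x \<longleftrightarrow> x \<otimes> g = g \<otimes> x"
  using assms by (metis inv_closed inv_inv inv_solve_left inv_solve_right m_assoc m_closed)

lemma inj_l: "g \<in> carrier G \<Longrightarrow> inj_on (\<lambda>x. inv x \<otimes> g) (carrier G)"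
  by (auto simp: inj_on_def) (metis inv_closed inv_inv right_cancel)

lemma inj_r: "g \<in> carrier G \<Longrightarrow> inj_on (\<lambda>x. g \<otimes> inv x) (carrier G)"
  by (auto simp: inj_on_def) (metis Units_eq Units_l_cancel inv_closed inv_inv)

lemma mom2:
  fixes t :: real
  assumes g: "g \<in> carrier G" and t: "t \<ge> 0"
  shows "(\<Sum>a\<in>GK k. exp (- t * card (Sg g (a ` {..<k}))))
     \<le> real nG ^ k * exp (k * (- 2*t + (exp (t*6) - 1)/6 * (cnt g/nG + 4*k/nG)))"
proof -
  define f where "f (j::nat) x = (if j = 0 then inv x \<otimes> g else g \<otimes> inv x)" for j x
  have inj: "inj_on (f j) (carrier G)" if "j < 2" for j
    using inj_l[OF g] inj_r[OF g] unfolding f_def by (cases "j = 0") auto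
  have U: "(\<Union>i<k. (\<lambda>j. f j (a i)) ` {..<2}) = Sg g (a ` {..<k})" for a
    unfolding Sg_def f_def by (auto simp: lessThan_Suc numeral_eq_Suc)
  have Nc: "(\<Sum>p\<in>{(j,l). j<l \<and> l<2}. real (card {x\<in>carrier G. f (fst p) x = f (snd p) x})) = cnt g"
    unfolding P2 cnt_def centr_def f_def using inv_comm_iff g by (simp cong: conj_cong)
  from moment_bound[where m=2 and K=k and k=k and f=f, OF inj _ t] show ?thesis unfolding U Nc by (simp add: algebra_simps)
qed

lemma mom4:
  fixes t :: real
  assumes g: "g \<in> carrier G" and h: "h \<in> carrier G" and gh: "g \<noteq> h" and t: "t \<ge> 0"
  shows "(\<Sum>a\<in>GK k. exp (- t * card (Sg g (a ` {..<k}) \<union> Sg h (a ` {..<k}))))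
     \<le> real nG ^ k * exp (k * (- 4*t + (exp (t*20) - 1)/20 * ((cnt g + cnt h + E1 g h + E2 g h)/nG + 16*k/nG)))"
proof -
  define f where "f (j::nat) x = [inv x \<otimes> g, g \<otimes> inv x, inv x \<otimes> h, h \<otimes> inv x] ! j" for j x
  have inj: "inj_on (f j) (carrier G)" if "j < 4" for j
    using inj_l[OF g] inj_r[OF g] inj_l[OF h] inj_r[OF h] that unfolding f_def
    by (auto simp: less_Suc_eq numeral_eq_Suc)
  have U: "(\<Union>i<k. (\<lambda>j. f j (a i)) ` {..<4}) = Sg g (a ` {..<k}) \<union> Sg h (a ` {..<k})" for a
    unfolding Sg_def f_def by (auto simp: lessThan_Suc numeral_eq_Suc)
  have e02: "{x\<in>carrier G. inv x \<otimes> g = inv x \<otimes> h} = {}" using gh g h by auto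
  have e13: "{x\<in>carrier G. g \<otimes> inv x = h \<otimes> inv x} = {}" using gh g h by auto
  have Nc: "(\<Sum>p\<in>{(j,l). j<l \<and> l<4}. real (card {x\<in>carrier G. f (fst p) x = f (snd p) x})) = cnt g + cnt h + E1 g h + E2 g h"
    unfolding P4 cnt_def centr_def f_def E1_def E2_def using inv_comm_iff g h e02 e13 by (simp cong: conj_cong)
  from moment_bound[where m=4 and K=k and k=k and f=f, OF inj _ t] show ?thesis unfolding U Nc by (simp add: algebra_simps)
qed

end

lemma expm1_le: fixes y::real assumes "y \<ge> 0" shows "exp y - 1 \<le> y * exp y"
proof -
  have "1 - y \<le> exp (-y)" using exp_ge_add_one_self[of "-y"] by simp
  then have "(1 - y) * exp y \<le> exp (-y) * exp y" by (intro mult_right_mono) auto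
  then show ?thesis by (simp add: exp_minus field_simps)
qed

lemma gamma_le: fixes t M::real assumes "t \<ge> 0" "M > 0" shows "(exp (t*M) - 1)/M \<le> t * exp (t*M)"
  using expm1_le[of "t*M"] assms by (simp add: field_simps mult_nonneg_nonneg)

lemma one_minus_pow_le: fixes s n :: real and k :: nat
  assumes "0 \<le> s" "s \<le> n" "n > 0"
  shows "(n - s)^k \<le> n^k * exp (- (k/n) * s)"
proof -
  have "(n - s)^k = n^k * (1 - s/n)^k" using assms by (simp add: power_mult_distrib[symmetric] field_simps)
  also have "(1 - s/n)^k \<le> (exp (- (s/n)))^k"
    using exp_ge_add_one_self[of "-(s/n)"] assms by (intro power_mono) (auto simp: field_simps)
  also have "(exp (- (s/n)))^k = exp (- (k/n) * s)" by (simp add: exp_of_nat_mult[symmetric] field_simps)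
  finally show ?thesis using assms by (simp add: mult_left_mono)
qed

lemma one_minus_pow_ge: fixes s n :: real and k :: nat
  assumes "0 \<le> s" "4 * s \<le> 2 * n" "n > 0" "s \<le> 2*k" 
  shows "(n - s)^k \<ge> n^k * exp (- (k/n + 4*(k/n)^2) * s)"
proof -
  define x where "x = s/n"
  have x0: "0 \<le> x" and x1: "x \<le> 1/2" using assms unfolding x_def by (auto simp: field_simps)
  have "(n - s)^k = n^k * (1 - x)^k" using assms unfolding x_def by (simp add: power_mult_distrib[symmetric] field_simps)
  moreover have "(1 - x)^k = exp (k * ln (1 - x))" using x1 by (subst exp_of_nat_mult) simp
  moreover have "k * ln (1 - x) \<ge> k * (- x - 2 * x^2)" using ln_one_minus_pos_lower_bound[OF x0 x1] by (intro mult_left_mono) auto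
  moreover have "k * (- x - 2 * x^2) \<ge> - (k/n + 4*(k/n)^2) * s"
  proof -
    have "2 * x^2 * k \<le> 4*(k/n)^2 * s"
    proof -
      have "2 * x^2 * k = 2 * (s/n) * (s/n) * k" unfolding x_def by (simp add: power2_eq_square)
      also have "\<dots> \<le> 2 * (s/n) * (2*k/n) * k" using assms by (intro mult_right_mono mult_left_mono divide_right_mono) auto
      also have "\<dots> = 4*(k/n)^2 * s" by (simp add: power2_eq_square field_simps)
      finally show ?thesis .
    qed
    moreover have "x * k = k/n * s" unfolding x_def by simp
    ultimately show ?thesis by (simp add: algebra_simps)
  qed
  ultimately have "exp (- (k/n + 4*(k/n)^2) * s) \<le> (1 - x)^k" by simp
  then show ?thesis using assms \<open>(n - s)^k = n^k * (1 - x)^k\<close> by (simp add: mult_left_mono)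
qed

lemma pow_bound: fixes x :: real and k :: nat assumes "0 \<le> x" "x \<le> 1"
  shows "1 - (1 - x)^k \<ge> k*x*(1 - k*x)"
proof -
  have b: "1 + k*x \<le> (1 + x)^k" by (rule Bernoulli_inequality) (use assms in auto)
  have p: "(1 - x)^k \<ge> 0" using assms by simp
  have "(1 - x)^k * (1 + k*x) \<le> (1 - x)^k * (1 + x)^k" by (rule mult_left_mono[OF b p])
  also have "\<dots> = (1 - x^2)^k" by (simp add: power_mult_distrib[symmetric] power2_eq_square algebra_simps)
  also have "\<dots> \<le> 1"
  proof -
    have "x^2 \<le> 1" using assms by (simp add: power_le_one)
    then show ?thesis by (intro power_le_one) (use assms in auto)
  qed
  finally have "(1 - x)^k * (1 + k*x) \<le> 1" .
  moreover have pos: "0 < 1 + k*x" using assms by (simp add: add_pos_nonneg)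
  ultimately have le1: "(1 - x)^k \<le> 1 / (1 + k*x)" by (subst pos_le_divide_eq[OF pos])
  define y where "y = k*x"
  have y0: "y \<ge> 0" unfolding y_def using assms by simp
  have "(1 - y*(1-y))*(1+y) = 1 + y^3" by (simp add: algebra_simps power3_eq_cube)
  then have "1 \<le> (1 - y*(1-y))*(1+y)" using y0 by simp
  then have "1 / (1 + y) \<le> 1 - y*(1-y)" using y0 by (simp add: field_simps)
  then show ?thesis using le1 unfolding y_def by linarith
qed

context fgrp begin

definition pr :: "nat \<Rightarrow> 'a \<Rightarrow> real" where
  "pr k g = (\<Sum>a\<in>GK k. (real nG - card (Sg g (a ` {..<k})))^k) / real nG ^ (2*k)"
definition pr2 :: "nat \<Rightarrow> 'a \<Rightarrow> 'a \<Rightarrow> real" where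
  "pr2 k g h = (\<Sum>a\<in>GK k. (real nG - card (Sg g (a ` {..<k}) \<union> Sg h (a ` {..<k})))^k) / real nG ^ (2*k)"

lemma cnt_le: "cnt g \<le> nG"
  unfolding cnt_def centr_def by (rule card_mono) auto

lemma card_Sg_le: "g \<in> carrier G \<Longrightarrow> a \<in> GK k \<Longrightarrow> card (Sg g (a ` {..<k})) \<le> nG"
  by (rule card_mono[OF fin Sg_sub]) (auto dest: GK_img)

lemma card_Sg2_le: "g \<in> carrier G \<Longrightarrow> h \<in> carrier G \<Longrightarrow> a \<in> GK k \<Longrightarrow> card (Sg g (a ` {..<k}) \<union> Sg h (a ` {..<k})) \<le> nG"
  by (rule card_mono[OF fin]) (use Sg_sub GK_img in blast)

lemma pr_upper:
  fixes k :: nat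
  assumes g: "g \<in> carrier G"
  defines "t \<equiv> real k / nG"
  shows "pr k g \<le> exp (k * (- 2*t + (exp (t*6) - 1)/6 * (cnt g/nG + 4*real k/nG)))"
proof -
  have t0: "t \<ge> 0" unfolding t_def by simp
  have "(\<Sum>a\<in>GK k. (real nG - card (Sg g (a ` {..<k})))^k) \<le> (\<Sum>a\<in>GK k. real nG^k * exp (- t * card (Sg g (a ` {..<k}))))"
    unfolding t_def using nG_pos card_Sg_le[OF g] by (intro sum_mono one_minus_pow_le) auto
  also have "\<dots> = real nG^k * (\<Sum>a\<in>GK k. exp (- t * card (Sg g (a ` {..<k}))))" by (simp add: sum_distrib_left)
  also have "\<dots> \<le> real nG^k * (real nG ^ k * exp (k * (- 2*t + (exp (t*6) - 1)/6 * (cnt g/nG + 4*real k/nG))))"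
    by (rule mult_left_mono[OF mom2[OF g t0]]) simp
  finally show ?thesis unfolding pr_def using nG_pos by (simp add: field_simps power_mult power2_eq_square)
qed

lemma pr2_upper:
  fixes k :: nat
  assumes g: "g \<in> carrier G" and h: "h \<in> carrier G" and gh: "g \<noteq> h"
  defines "t \<equiv> real k / nG"
  shows "pr2 k g h \<le> exp (k * (- 4*t + (exp (t*20) - 1)/20 * (real (cnt g + cnt h + E1 g h + E2 g h)/nG + 16*real k/nG)))"
proof -
  have t0: "t \<ge> 0" unfolding t_def by simp
  have "(\<Sum>a\<in>GK k. (real nG - card (Sg g (a ` {..<k}) \<union> Sg h (a ` {..<k})))^k) \<le> (\<Sum>a\<in>GK k. real nG^k * exp (- t * card (Sg g (a ` {..<k}) \<union> Sg h (a ` {..<k}))))"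
    unfolding t_def using nG_pos card_Sg2_le[OF g h] by (intro sum_mono one_minus_pow_le) auto
  also have "\<dots> = real nG^k * (\<Sum>a\<in>GK k. exp (- t * card (Sg g (a ` {..<k}) \<union> Sg h (a ` {..<k}))))" by (simp add: sum_distrib_left)
  also have "\<dots> \<le> real nG^k * (real nG ^ k * exp (k * (- 4*t + (exp (t*20) - 1)/20 * (real (cnt g + cnt h + E1 g h + E2 g h)/nG + 16*real k/nG))))"
    by (rule mult_left_mono[OF mom4[OF g h gh t0]]) simp
  finally show ?thesis unfolding pr2_def using nG_pos by (simp add: field_simps power_mult power2_eq_square)
qed

end

lemma err_bound:
  fixes k t \<kappa> M c B D :: real
  assumes "t \<ge> 0" "k \<ge> 0" "\<kappa> = k*t" "M > 0" "M \<le> 20" "0 \<le> c" "c \<le> B" "D \<ge> 0"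
  shows "k * ((exp (t*M) - 1)/M * (c + D*t)) \<le> \<kappa>*c + (M*B + D) * (\<kappa> * t * exp (20*t))"
proof -
  have ctd: "c + D*t \<ge> 0" using assms by simp
  have \<kappa>0: "\<kappa> \<ge> 0" using assms by simp
  have "k * ((exp (t*M) - 1)/M * (c + D*t)) \<le> k * (t * exp (t*M) * (c + D*t))"
    using gamma_le[of t M] assms ctd by (intro mult_left_mono mult_right_mono) auto
  also have "\<dots> = \<kappa>*c + \<kappa> * (exp (t*M) - 1) * c + \<kappa> * D * t * exp (t*M)" using assms by (simp add: algebra_simps)
  also have "\<kappa> * (exp (t*M) - 1) * c \<le> \<kappa> * (t*M * exp (t*M)) * B"
  proof -
    have "exp (t*M) - 1 \<le> t*M * exp (t*M)" using expm1_le[of "t*M"] assms by simp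
    moreover have "exp (t*M) - 1 \<ge> 0" using assms by simp
    ultimately show ?thesis using assms \<kappa>0 by (intro mult_mono mult_left_mono) auto
  qed
  also have "t*M \<le> t*20" using assms by (intro mult_left_mono) auto
  then have "exp (t*M) \<le> exp (20*t)" by (simp add: mult.commute)
  then have "\<kappa>*c + \<kappa> * (t*M * exp (t*M)) * B + \<kappa> * D * t * exp (t*M) \<le> \<kappa>*c + \<kappa> * (t*M * exp (20*t)) * B + \<kappa> * D * t * exp (20*t)"
    using assms \<kappa>0 by (intro add_mono mult_left_mono mult_right_mono order_refl) (auto intro: mult_nonneg_nonneg)
  also have "\<dots> = \<kappa>*c + (M*B + D) * (\<kappa> * t * exp (20*t))" by (simp add: algebra_simps)
  finally show ?thesis by simp
qed

context fgrp begin

lemma E1_le: "E1 g h \<le> nG" unfolding E1_def by (rule card_mono) auto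
lemma E2_le: "E2 g h \<le> nG" unfolding E2_def by (rule card_mono) auto

lemma pr_up2:
  fixes k :: nat
  assumes g: "g \<in> carrier G"
  defines "t \<equiv> real k / nG" and "\<kappa> \<equiv> real k ^ 2 / nG"
  shows "pr k g \<le> exp (- \<kappa> * (2 - cnt g / nG) + 10 * (\<kappa> * t * exp (20*t)))"
proof -
  have n0: "real nG > 0" using nG_pos by simp
  have kt: "\<kappa> = real k * t" unfolding t_def \<kappa>_def by (simp add: power2_eq_square)
  have c1: "cnt g / nG \<le> 1" using cnt_le n0 by simp
  have "real k * ((exp (t*6) - 1)/6 * (cnt g/nG + 4 * t)) \<le> \<kappa> * (cnt g/nG) + (6*1 + 4) * (\<kappa> * t * exp (20*t))"
    by (rule err_bound) (use kt c1 n0 in \<open>auto simp: t_def\<close>)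
  moreover have "4*real k/nG = 4 * t" unfolding t_def by simp
  ultimately have "k * (- 2*t + (exp (t*6) - 1)/6 * (cnt g/nG + 4*real k/nG)) \<le> - \<kappa> * (2 - cnt g / nG) + 10 * (\<kappa> * t * exp (20*t))"
    using kt by (simp add: algebra_simps)
  then show ?thesis using pr_upper[OF g, of k] unfolding t_def by (meson exp_le_cancel_iff order_trans)
qed

lemma pr2_up2:
  fixes k :: nat
  assumes g: "g \<in> carrier G" and h: "h \<in> carrier G" and gh: "g \<noteq> h"
  defines "t \<equiv> real k / nG" and "\<kappa> \<equiv> real k ^ 2 / nG"
  shows "pr2 k g h \<le> exp (- 4 * \<kappa> + \<kappa> * (real (cnt g + cnt h + E1 g h + E2 g h) / nG) + 96 * (\<kappa> * t * exp (20*t)))"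
proof -
  have n0: "real nG > 0" using nG_pos by simp
  have kt: "\<kappa> = real k * t" unfolding t_def \<kappa>_def by (simp add: power2_eq_square)
  have "real (cnt g + cnt h + E1 g h + E2 g h) \<le> 4 * nG" using cnt_le[of g] cnt_le[of h] E1_le[of g h] E2_le[of g h] by simp
  then have c1: "real (cnt g + cnt h + E1 g h + E2 g h) / nG \<le> 4" using n0 by (simp add: divide_le_eq)
  have "real k * ((exp (t*20) - 1)/20 * (real (cnt g + cnt h + E1 g h + E2 g h)/nG + 16 * t)) \<le> \<kappa> * (real (cnt g + cnt h + E1 g h + E2 g h)/nG) + (20*4 + 16) * (\<kappa> * t * exp (20*t))"
    by (rule err_bound) (use kt c1 n0 in \<open>auto simp: t_def\<close>)
  moreover have "16*real k/nG = 16 * t" unfolding t_def by simp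
  ultimately have "k * (- 4*t + (exp (t*20) - 1)/20 * (real (cnt g + cnt h + E1 g h + E2 g h)/nG + 16*real k/nG)) \<le> - 4 * \<kappa> + \<kappa> * (real (cnt g + cnt h + E1 g h + E2 g h) / nG) + 96 * (\<kappa> * t * exp (20*t))"
    using kt by (simp add: algebra_simps)
  then show ?thesis using pr2_upper[OF g h gh, of k] unfolding t_def by (meson exp_le_cancel_iff order_trans)
qed

lemma card_Sg_C:
  assumes g: "g \<in> carrier G" and A: "A \<subseteq> carrier G" "finite A"
  shows "card (Sg g A) + card (A \<inter> centr G g) \<le> 2 * card A"
proof -
  have "Sg g A \<subseteq> (\<lambda>x. inv x \<otimes> g) ` A \<union> (\<lambda>x. g \<otimes> inv x) ` (A - centr G g)"
  proof
    fix y assume "y \<in> Sg g A"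
    then obtain x where x: "x \<in> A" "y = inv x \<otimes> g \<or> y = g \<otimes> inv x" unfolding Sg_def by auto
    show "y \<in> (\<lambda>x. inv x \<otimes> g) ` A \<union> (\<lambda>x. g \<otimes> inv x) ` (A - centr G g)"
    proof (cases "x \<in> centr G g")
      case True
      then have "g \<otimes> inv x = inv x \<otimes> g" using inv_comm_iff[of x g] g A x unfolding centr_def by auto
      then show ?thesis using x by auto
    next
      case False then show ?thesis using x by auto
    qed
  qed
  then have "card (Sg g A) \<le> card ((\<lambda>x. inv x \<otimes> g) ` A \<union> (\<lambda>x. g \<otimes> inv x) ` (A - centr G g))"
    by (rule card_mono[rotated]) (use A in auto)
  also have "\<dots> \<le> card ((\<lambda>x. inv x \<otimes> g) ` A) + card ((\<lambda>x. g \<otimes> inv x) ` (A - centr G g))" by (rule card_Un_le)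
  also have "\<dots> \<le> card A + card (A - centr G g)" by (intro add_mono card_image_le) (use A in auto)
  finally show ?thesis using card_Int_Diff[of A "centr G g"] A by simp
qed

lemma sum_card_int:
  assumes C: "C \<subseteq> carrier G"
  shows "(\<Sum>a\<in>GK k. real (card (a ` {..<k} \<inter> C))) = card C * (real nG ^ k - (real nG - 1) ^ k)"
proof -
  have finC: "finite C" using C fin by (rule finite_subset)
  have "(\<Sum>a\<in>GK k. real (card (a ` {..<k} \<inter> C))) = (\<Sum>a\<in>GK k. \<Sum>x\<in>C. of_bool (x \<in> a ` {..<k}))"
    using finC by (intro sum.cong refl) (simp add: Int_def conj_commute)
  also have "\<dots> = (\<Sum>x\<in>C. \<Sum>a\<in>GK k. of_bool (x \<in> a ` {..<k}))" by (rule sum.swap)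
  also have "\<dots> = (\<Sum>x\<in>C. real nG ^ k - (real nG - 1) ^ k)"
  proof (rule sum.cong[OF refl])
    fix x assume x: "x \<in> C"
    have "(\<Sum>a\<in>GK k. of_bool (x \<in> a ` {..<k}) :: real) = (\<Sum>a\<in>GK k. 1 - of_bool (\<forall>j<k. a j \<notin> {x}))"
      by (intro sum.cong refl) auto
    also have "\<dots> = real (card (GK k)) - (\<Sum>a\<in>GK k. of_bool (\<forall>j<k. a j \<notin> {x}))"
      by (simp only: sum_subtractf) simp
    also have "(\<Sum>a\<in>GK k. of_bool (\<forall>j<k. a j \<notin> {x})) = (real nG - card {x}) ^ k"
      by (rule count_avoid) (use x C in auto)
    finally show "(\<Sum>a\<in>GK k. of_bool (x \<in> a ` {..<k}) :: real) = real nG ^ k - (real nG - 1) ^ k"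
      by (simp add: card_GK)
  qed
  finally show ?thesis by simp
qed

lemma pr_low:
  fixes k :: nat
  assumes g: "g \<in> carrier G" and k4: "4 * k \<le> nG"
  defines "t \<equiv> real k / nG" and "\<kappa> \<equiv> real k ^ 2 / nG"
  shows "pr k g \<ge> exp (- \<kappa> * (2 - cnt g / nG) - 9 * (\<kappa> * t))"
proof -
  have n0: "real nG > 0" using nG_pos by simp
  define \<tau> where "\<tau> = t + 4*t^2"
  define s where "s a = real (card (Sg g (a ` {..<k})))" for a
  define C where "C = centr G g"
  have CC: "C \<subseteq> carrier G" unfolding C_def centr_def by auto
  have t0: "t \<ge> 0" and t1: "t \<le> 1" unfolding t_def using k4 n0 by (auto simp: field_simps)
  have \<tau>0: "\<tau> \<ge> 0" unfolding \<tau>_def using t0 by simp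
  have sbound: "s a + real (card (a ` {..<k} \<inter> C)) \<le> 2 * real k" if a: "a \<in> GK k" for a
  proof -
    have "card (Sg g (a ` {..<k})) + card (a ` {..<k} \<inter> C) \<le> 2 * card (a ` {..<k})"
      unfolding C_def by (rule card_Sg_C[OF g GK_img[OF a]]) simp
    also have "card (a ` {..<k}) \<le> k" using card_image_le[of "{..<k}" a] by simp
    finally show ?thesis unfolding s_def by linarith
  qed
  have s0: "s a \<ge> 0" for a unfolding s_def by simp
  have s2k: "s a \<le> 2 * real k" if "a \<in> GK k" for a using sbound[OF that] by simp
  have "(\<Sum>a\<in>GK k. real nG^k * exp (- \<tau> * s a)) \<le> (\<Sum>a\<in>GK k. (real nG - s a)^k)"
  proof (rule sum_mono)
    fix a assume a: "a \<in> GK k"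
    have "real nG ^ k * exp (- (real k / real nG + 4 * (real k / real nG)\<^sup>2) * s a) \<le> (real nG - s a) ^ k"
      by (rule one_minus_pow_ge) (use s0 s2k[OF a] k4 n0 in auto)
    then show "real nG^k * exp (- \<tau> * s a) \<le> (real nG - s a)^k" unfolding \<tau>_def t_def .
  qed
  then have st1: "pr k g * real nG ^ (2*k) \<ge> real nG^k * (\<Sum>a\<in>GK k. exp (- \<tau> * s a))"
    unfolding pr_def s_def using n0 by (simp add: sum_distrib_left)
  define m0 where "m0 = (\<Sum>a\<in>GK k. s a) / real nG ^ k"
  have tang: "exp (- \<tau> * s a) \<ge> exp (- \<tau> * m0) * (1 + (- \<tau> * s a) - (- \<tau> * m0))" for a
  proof -
    have "exp (- \<tau> * s a - (- \<tau> * m0)) \<ge> 1 + (- \<tau> * s a - (- \<tau> * m0))" by (rule exp_ge_add_one_self)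
    then have A: "exp (- \<tau> * m0) * exp (- \<tau> * s a - (- \<tau> * m0)) \<ge> exp (- \<tau> * m0) * (1 + (- \<tau> * s a - (- \<tau> * m0)))"
      by (intro mult_left_mono) auto
    have B: "exp (- \<tau> * m0) * exp (- \<tau> * s a - (- \<tau> * m0)) = exp (- \<tau> * s a)"
      by (simp add: exp_add[symmetric])
    have "exp (- \<tau> * m0) * (1 + (- \<tau> * s a) - (- \<tau> * m0)) = exp (- \<tau> * m0) * (1 + (- \<tau> * s a - (- \<tau> * m0)))" by simp
    also have "\<dots> \<le> exp (- \<tau> * m0) * exp (- \<tau> * s a - (- \<tau> * m0))" by (rule A)
    also have "\<dots> = exp (- \<tau> * s a)" by (rule B)
    finally show ?thesis .
  qed
  have "(\<Sum>a\<in>GK k. exp (- \<tau> * s a)) \<ge> (\<Sum>a\<in>GK k. exp (- \<tau> * m0) * (1 + (- \<tau> * s a) - (- \<tau> * m0)))"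
    by (rule sum_mono) (rule tang)
  also have "(\<Sum>a\<in>GK k. exp (- \<tau> * m0) * (1 + (- \<tau> * s a) - (- \<tau> * m0)))
      = exp (- \<tau> * m0) * (real (card (GK k)) * (1 + \<tau> * m0) - \<tau> * (\<Sum>a\<in>GK k. s a))"
    by (simp add: sum_distrib_left sum_subtractf sum.distrib algebra_simps)
  also have "\<dots> = exp (- \<tau> * m0) * real nG ^ k"
    unfolding m0_def card_GK using n0 by (simp add: field_simps)
  finally have st2: "(\<Sum>a\<in>GK k. exp (- \<tau> * s a)) \<ge> exp (- \<tau> * m0) * real nG ^ k" .
  have "(\<Sum>a\<in>GK k. s a) \<le> (\<Sum>a\<in>GK k. 2 * real k - real (card (a ` {..<k} \<inter> C)))"
    by (rule sum_mono) (use sbound in force)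
  also have "\<dots> = 2 * real k * real nG ^ k - card C * (real nG ^ k - (real nG - 1) ^ k)"
    by (simp add: sum_subtractf sum_card_int[OF CC] card_GK)
  finally have "m0 \<le> 2 * real k - card C * (1 - (1 - 1/real nG) ^ k)"
    unfolding m0_def using n0 by (simp add: field_simps power_divide)
  moreover have "1 - (1 - 1/real nG) ^ k \<ge> k * (1/real nG) * (1 - k * (1/real nG))"
    by (rule pow_bound) (use n0 nG_pos in \<open>auto simp: field_simps\<close>)
  ultimately have "m0 \<le> 2 * real k - card C * (k * (1/real nG) * (1 - k * (1/real nG)))"
    by (smt (verit) mult_left_mono of_nat_0_le_iff)
  also have "\<dots> = real k * (2 - cnt g / nG * (1 - t))" unfolding cnt_def C_def t_def using n0 by (simp add: field_simps)
  finally have m0b: "m0 \<le> real k * (2 - cnt g / nG * (1 - t))" .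
  have "\<tau> * m0 \<le> \<tau> * (real k * (2 - cnt g / nG * (1 - t)))" by (rule mult_left_mono[OF m0b \<tau>0])
  also have "\<dots> = (\<kappa> + 4 * \<kappa> * t) * (2 - cnt g / nG * (1 - t))"
    unfolding \<tau>_def \<kappa>_def t_def using n0 by (simp add: field_simps power2_eq_square)
  also have "\<dots> \<le> \<kappa> * (2 - cnt g / nG) + 9 * (\<kappa> * t)"
  proof -
    define c where "c = cnt g / nG"
    have c0: "0 \<le> c" and c1: "c \<le> 1" unfolding c_def using cnt_le[of g] n0 by auto
    have \<kappa>0: "\<kappa> \<ge> 0" unfolding \<kappa>_def by simp
    have "(\<kappa> + 4 * \<kappa> * t) * (2 - c * (1 - t)) = \<kappa> * (2 - c) + \<kappa> * c * t + 4 * \<kappa> * t * (2 - c * (1 - t))"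
      by (simp add: algebra_simps)
    also have "\<kappa> * c * t \<le> \<kappa> * t"
    proof -
      have "c * t \<le> 1 * t" using c1 t0 by (rule mult_right_mono)
      then have "\<kappa> * (c * t) \<le> \<kappa> * t" using \<kappa>0 by (simp add: mult_left_mono)
      then show ?thesis by (simp add: mult.assoc)
    qed
    also have "4 * \<kappa> * t * (2 - c * (1 - t)) \<le> 4 * \<kappa> * t * 2"
      using c0 t1 \<kappa>0 t0 by (intro mult_left_mono) (auto intro: mult_nonneg_nonneg)
    finally show ?thesis unfolding c_def by simp
  qed
  finally have "\<tau> * m0 \<le> \<kappa> * (2 - cnt g / nG) + 9 * (\<kappa> * t)" .
  then have "exp (- \<tau> * m0) \<ge> exp (- \<kappa> * (2 - cnt g / nG) - 9 * (\<kappa> * t))" by simp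
  with st1 st2 have "pr k g * real nG ^ (2*k) \<ge> real nG^k * (exp (- \<kappa> * (2 - cnt g / nG) - 9 * (\<kappa> * t)) * real nG ^ k)"
    by (smt (verit) mult_left_mono mult_right_mono zero_le_power of_nat_0_le_iff)
  then show ?thesis using n0 by (simp add: power_mult power2_eq_square field_simps)
qed

end

context fgrp begin

lemma conj_eq:
  assumes "x \<in> carrier G" "g \<in> carrier G" "h \<in> carrier G"
  shows "(inv x \<otimes> g \<otimes> x = h) \<longleftrightarrow> (g \<otimes> x = x \<otimes> h)"
proof -
  have "inv x \<otimes> g \<otimes> x = inv x \<otimes> (g \<otimes> x)" using assms by (simp add: m_assoc)
  then show ?thesis using inv_solve_left'[of h x "g \<otimes> x"] assms by auto
qed

lemma conj_iff:
  assumes "x \<in> carrier G" "g \<in> carrier G" "h \<in> carrier G"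
  shows "(inv x \<otimes> g = h \<otimes> inv x) \<longleftrightarrow> (inv x \<otimes> g \<otimes> x = h)"
  using inv_solve_right[of "inv x \<otimes> g" h x] assms by auto

lemma E1_eq: "g \<in> carrier G \<Longrightarrow> h \<in> carrier G \<Longrightarrow> E1 g h = card {x\<in>carrier G. g \<otimes> x = x \<otimes> h}"
  unfolding E1_def by (intro arg_cong[where f=card]) (auto simp: conj_iff conj_eq)

lemma E2_eq_E1:
  assumes g: "g \<in> carrier G" and h: "h \<in> carrier G"
  shows "E2 g h = E1 g h"
proof -
  have e: "{x\<in>carrier G. g \<otimes> inv x = inv x \<otimes> h} = {x\<in>carrier G. g \<otimes> inv x = inv x \<otimes> h}" ..
  have "bij_betw (\<lambda>x. inv x) {x\<in>carrier G. g \<otimes> x = x \<otimes> h} {x\<in>carrier G. g \<otimes> inv x = inv x \<otimes> h}"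
    by (rule bij_betwI[where g="\<lambda>x. inv x"]) auto
  then show ?thesis unfolding E2_def E1_eq[OF g h] by (simp add: bij_betw_same_card)
qed

lemma E1_pos_obtain:
  assumes g: "g \<in> carrier G" and h: "h \<in> carrier G" and pos: "E1 g h > 0"
  obtains x0 where "x0 \<in> carrier G" "g \<otimes> x0 = x0 \<otimes> h"
proof -
  have "{x\<in>carrier G. g \<otimes> x = x \<otimes> h} \<noteq> {}" using pos unfolding E1_eq[OF g h] by (metis card.empty less_irrefl)
  then show ?thesis using that by blast
qed

lemma cnt_le_E1:
  assumes g: "g \<in> carrier G" and h: "h \<in> carrier G" and pos: "E1 g h > 0"
  shows "cnt g \<le> E1 g h"
proof -
  obtain x0 where x0: "x0 \<in> carrier G" "g \<otimes> x0 = x0 \<otimes> h" using E1_pos_obtain[OF g h pos] .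
  have sub: "(\<lambda>z. z \<otimes> x0) ` centr G g \<subseteq> {x\<in>carrier G. g \<otimes> x = x \<otimes> h}"
  proof
    fix y assume "y \<in> (\<lambda>z. z \<otimes> x0) ` centr G g"
    then obtain z where z: "z \<in> carrier G" "z \<otimes> g = g \<otimes> z" "y = z \<otimes> x0" unfolding centr_def by auto
    have "g \<otimes> (z \<otimes> x0) = (g \<otimes> z) \<otimes> x0" using z(1) x0(1) g by (simp add: m_assoc)
    also have "\<dots> = (z \<otimes> g) \<otimes> x0" using z(2) by simp
    also have "\<dots> = z \<otimes> (g \<otimes> x0)" using z(1) x0(1) g by (simp add: m_assoc)
    also have "\<dots> = z \<otimes> (x0 \<otimes> h)" using x0(2) by simp
    also have "\<dots> = (z \<otimes> x0) \<otimes> h" using z(1) x0(1) g h by (simp add: m_assoc)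
    finally show "y \<in> {x\<in>carrier G. g \<otimes> x = x \<otimes> h}" using z x0 by auto
  qed
  have inj: "inj_on (\<lambda>z. z \<otimes> x0) (centr G g)"
    using x0 unfolding centr_def by (auto simp: inj_on_def)
  have "card (centr G g) \<le> card {x\<in>carrier G. g \<otimes> x = x \<otimes> h}"
    by (rule card_inj_on_le[OF inj sub]) simp
  then show ?thesis unfolding cnt_def E1_eq[OF g h] .
qed

lemma E1_le_cnt:
  assumes g: "g \<in> carrier G" and h: "h \<in> carrier G" and pos: "E1 g h > 0"
  shows "E1 g h \<le> cnt h"
proof -
  obtain x0 where x0: "x0 \<in> carrier G" "g \<otimes> x0 = x0 \<otimes> h" using E1_pos_obtain[OF g h pos] .
  have sub: "(\<lambda>x. inv x0 \<otimes> x) ` {x\<in>carrier G. g \<otimes> x = x \<otimes> h} \<subseteq> centr G h"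
  proof
    fix y assume "y \<in> (\<lambda>x. inv x0 \<otimes> x) ` {x\<in>carrier G. g \<otimes> x = x \<otimes> h}"
    then obtain x where x: "x \<in> carrier G" "g \<otimes> x = x \<otimes> h" "y = inv x0 \<otimes> x" by auto
    have gx0: "inv x0 \<otimes> g = h \<otimes> inv x0"
      using x0 g h by (metis conj_eq conj_iff inv_closed)
    have "y \<otimes> h = inv x0 \<otimes> (x \<otimes> h)" using x x0 h by (simp add: m_assoc)
    also have "\<dots> = inv x0 \<otimes> (g \<otimes> x)" using x by simp
    also have "\<dots> = (inv x0 \<otimes> g) \<otimes> x" using x x0 g by (simp add: m_assoc)
    also have "\<dots> = (h \<otimes> inv x0) \<otimes> x" using gx0 by simp
    also have "\<dots> = h \<otimes> y" using x x0 h by (simp add: m_assoc)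
    finally show "y \<in> centr G h" unfolding centr_def using x x0 by auto
  qed
  have inj: "inj_on (\<lambda>x. inv x0 \<otimes> x) {x\<in>carrier G. g \<otimes> x = x \<otimes> h}"
    using x0 by (auto simp: inj_on_def)
  have "card {x\<in>carrier G. g \<otimes> x = x \<otimes> h} \<le> card (centr G h)"
    by (rule card_inj_on_le[OF inj sub]) (auto simp: centr_def)
  then show ?thesis unfolding cnt_def E1_eq[OF g h] .
qed

lemma E1_sym:
  assumes g: "g \<in> carrier G" and h: "h \<in> carrier G" and pos: "E1 g h > 0"
  shows "E1 h g > 0"
proof -
  obtain x0 where x0: "x0 \<in> carrier G" "g \<otimes> x0 = x0 \<otimes> h" using E1_pos_obtain[OF g h pos] .
  have "h \<otimes> inv x0 = inv x0 \<otimes> g"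
  proof -
    have "x0 \<otimes> h \<otimes> inv x0 = (g \<otimes> x0) \<otimes> inv x0" using x0(2) by simp
    also have "\<dots> = g" using x0(1) g by (simp add: m_assoc)
    finally have "inv (inv x0) \<otimes> h \<otimes> inv x0 = g" using x0(1) by simp
    then show ?thesis using conj_eq[of "inv x0" h g] x0 g h by simp
  qed
  then have "inv x0 \<in> {x\<in>carrier G. h \<otimes> x = x \<otimes> g}" using x0 by auto
  then have "{x\<in>carrier G. h \<otimes> x = x \<otimes> g} \<noteq> {}" by blast
  then show ?thesis unfolding E1_eq[OF h g] by (simp add: card_gt_0_iff)
qed

lemma cnt_conj:
  assumes g: "g \<in> carrier G" and h: "h \<in> carrier G" and pos: "E1 g h > 0"
  shows "cnt g = cnt h" "E1 g h \<le> cnt g"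
proof -
  have a: "cnt g \<le> cnt h" using cnt_le_E1[OF g h pos] E1_le_cnt[OF g h pos] by simp
  have "cnt h \<le> cnt g" using cnt_le_E1[OF h g E1_sym[OF g h pos]] E1_le_cnt[OF h g E1_sym[OF g h pos]] by simp
  then show "cnt g = cnt h" using a by simp
  then show "E1 g h \<le> cnt g" using E1_le_cnt[OF g h pos] by simp
qed

end

context fgrp begin

lemma count_conj:
  assumes g: "g \<in> carrier G"
  shows "card {h\<in>carrier G. E1 g h > 0} * cnt g \<le> nG"
proof -
  define \<phi> where "\<phi> x = inv x \<otimes> g \<otimes> x" for x
  have sub: "\<phi> ` carrier G \<subseteq> carrier G" unfolding \<phi>_def using g by auto
  have fib: "card {x\<in>carrier G. \<phi> x = h} = E1 g h" if "h \<in> carrier G" for h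
    unfolding E1_eq[OF g that] \<phi>_def using conj_eq g that by (intro arg_cong[where f=card]) auto
  have "(\<Sum>h\<in>{h\<in>carrier G. E1 g h > 0}. cnt g) \<le> (\<Sum>h\<in>{h\<in>carrier G. E1 g h > 0}. card {x\<in>carrier G. \<phi> x = h})"
    by (rule sum_mono) (use cnt_le_E1 g fib in auto)
  also have "\<dots> \<le> (\<Sum>h\<in>carrier G. card {x\<in>carrier G. \<phi> x = h})"
    by (rule sum_mono2) auto
  also have "\<dots> = (\<Sum>h\<in>carrier G. \<Sum>x\<in>{x\<in>carrier G. \<phi> x = h}. (1::nat))"
    by (simp only: card_eq_sum)
  also have "\<dots> = (\<Sum>x\<in>carrier G. 1)" by (rule sum.group[OF fin fin sub])
  finally show ?thesis by simp
qed

lemma centr_subgroup: assumes g: "g \<in> carrier G" shows "subgroup (centr G g) G"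
proof (rule subgroupI)
  show "centr G g \<subseteq> carrier G" unfolding centr_def by auto
  show "centr G g \<noteq> {}" unfolding centr_def using g by auto
next
  fix a assume "a \<in> centr G g"
  then show "inv a \<in> centr G g" using inv_comm_iff[of a g] g unfolding centr_def by auto
next
  fix a b assume a: "a \<in> centr G g" and b: "b \<in> centr G g"
  have aC: "a \<in> carrier G" and bC: "b \<in> carrier G" using a b unfolding centr_def by auto
  have "(a \<otimes> b) \<otimes> g = a \<otimes> (b \<otimes> g)" using aC bC g by (simp add: m_assoc)
  also have "\<dots> = a \<otimes> (g \<otimes> b)" using b unfolding centr_def by simp
  also have "\<dots> = (a \<otimes> g) \<otimes> b" using aC bC g by (simp add: m_assoc)
  also have "\<dots> = (g \<otimes> a) \<otimes> b" using a unfolding centr_def by simp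
  also have "\<dots> = g \<otimes> (a \<otimes> b)" using aC bC g by (simp add: m_assoc)
  finally show "a \<otimes> b \<in> centr G g" using a b unfolding centr_def by auto
qed

lemma noncentral_half:
  assumes g: "g \<in> carrier G" and h: "h \<in> carrier G" and gh: "h \<noteq> g" and pos: "E1 g h > 0"
  shows "2 * cnt g \<le> nG"
proof -
  obtain x0 where x0: "x0 \<in> carrier G" "g \<otimes> x0 = x0 \<otimes> h" using E1_pos_obtain[OF g h pos] .
  have "x0 \<notin> centr G g"
  proof
    assume "x0 \<in> centr G g"
    then have "x0 \<otimes> g = x0 \<otimes> h" using x0 unfolding centr_def by auto
    then show False using x0(1) g h gh by simp
  qed
  then have ne: "centr G g \<noteq> carrier G" using x0 by auto
  have sub: "centr G g \<subseteq> carrier G" unfolding centr_def by auto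
  then have lt: "cnt g < nG" unfolding cnt_def using ne fin by (meson psubsetI psubset_card_mono)
  have eq: "card (rcosets (centr G g)) * cnt g = nG"
    using lagrange[OF centr_subgroup[OF g]] unfolding cnt_def order_def .
  have r0: "card (rcosets (centr G g)) \<noteq> 0"
    using eq nG_pos by (metis mult_0 less_irrefl)
  have r1: "card (rcosets (centr G g)) \<noteq> 1"
    using eq lt by auto
  have "2 \<le> card (rcosets (centr G g))" using r0 r1 by linarith
  then have "2 * cnt g \<le> card (rcosets (centr G g)) * cnt g" by (rule mult_le_mono1)
  then show ?thesis using eq by simp
qed

end

declare sum_of_bool_eq[simp del] sum_of_bool_mult_eq[simp del] sum_mult_of_bool_eq[simp del]

lemma triple_swap: "(\<Sum>a\<in>A. \<Sum>b\<in>B. \<Sum>g\<in>C. f a b g) = (\<Sum>g\<in>C. \<Sum>a\<in>A. \<Sum>b\<in>B. f a b g :: real)"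
proof -
  have "(\<Sum>a\<in>A. \<Sum>b\<in>B. \<Sum>g\<in>C. f a b g) = (\<Sum>a\<in>A. \<Sum>g\<in>C. \<Sum>b\<in>B. f a b g)"
    by (intro sum.cong refl) (rule sum.swap)
  also have "\<dots> = (\<Sum>g\<in>C. \<Sum>a\<in>A. \<Sum>b\<in>B. f a b g)" by (rule sum.swap)
  finally show ?thesis .
qed

context fgrp begin

lemma pr_alt: "g \<in> carrier G \<Longrightarrow> pr k g = (\<Sum>a\<in>GK k. \<Sum>b\<in>GK k. of_bool (unc k a b g)) / real nG ^ (2*k)"
  unfolding pr_def by (intro arg_cong2[where f="(/)"] sum.cong refl) (simp add: sum_b_unc del: sum_of_bool_eq)

lemma pr2_alt: "g \<in> carrier G \<Longrightarrow> h \<in> carrier G \<Longrightarrow> pr2 k g h = (\<Sum>a\<in>GK k. \<Sum>b\<in>GK k. of_bool (unc k a b g) * of_bool (unc k a b h)) / real nG ^ (2*k)"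
  unfolding pr2_def by (intro arg_cong2[where f="(/)"] sum.cong refl) (simp add: sum_b_unc2 del: sum_of_bool_eq sum_of_bool_mult_eq sum_mult_of_bool_eq)

lemma pr_nonneg: "g \<in> carrier G \<Longrightarrow> pr k g \<ge> 0"
  by (simp add: pr_alt sum_nonneg divide_nonneg_pos nG_pos)

lemma pr2_nonneg: "g \<in> carrier G \<Longrightarrow> h \<in> carrier G \<Longrightarrow> pr2 k g h \<ge> 0"
  by (simp add: pr2_alt sum_nonneg divide_nonneg_pos nG_pos)

lemma nsq: "real nG ^ (2*k) = real (card (GK k)) * real (card (GK k))"
  by (simp add: card_GK power_mult power2_eq_square power_mult_distrib)

lemma Pcov_le1: "Pcov G k \<le> 1"
proof -
  have "(\<Sum>a\<in>GK k. \<Sum>b\<in>GK k. of_bool (\<forall>g\<in>carrier G. \<not> unc k a b g) :: real) \<le> (\<Sum>a\<in>GK k. \<Sum>b\<in>GK k. 1)"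
    by (intro sum_mono) auto
  also have "\<dots> = real nG ^ (2*k)" by (simp add: nsq)
  finally show ?thesis unfolding Pcov_sum using nG_pos by (simp add: divide_le_eq)
qed

lemma Pcov_ge0: "Pcov G k \<ge> 0"
  unfolding Pcov_sum by (simp add: sum_nonneg divide_nonneg_pos nG_pos)

lemma up_main: "1 - Pcov G k \<le> (\<Sum>g\<in>carrier G. pr k g)"
proof -
  have n0: "real nG ^ (2*k) > 0" using nG_pos by simp
  have "real nG ^ (2*k) - (\<Sum>a\<in>GK k. \<Sum>b\<in>GK k. of_bool (\<forall>g\<in>carrier G. \<not> unc k a b g))
      = (\<Sum>a\<in>GK k. \<Sum>b\<in>GK k. 1 - of_bool (\<forall>g\<in>carrier G. \<not> unc k a b g))"
    by (simp add: nsq sum_subtractf)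
  also have "\<dots> \<le> (\<Sum>a\<in>GK k. \<Sum>b\<in>GK k. \<Sum>g\<in>carrier G. of_bool (unc k a b g))"
  proof (intro sum_mono)
    fix a b
    show "1 - of_bool (\<forall>g\<in>carrier G. \<not> unc k a b g) \<le> (\<Sum>g\<in>carrier G. of_bool (unc k a b g) :: real)"
    proof (cases "\<forall>g\<in>carrier G. \<not> unc k a b g")
      case True then show ?thesis by (simp add: sum_nonneg)
    next
      case False
      then obtain g where g: "g \<in> carrier G" "unc k a b g" by auto
      then have "(1::real) \<le> (\<Sum>g\<in>carrier G. of_bool (unc k a b g))"
        using member_le_sum[of g "carrier G" "\<lambda>g. of_bool (unc k a b g) :: real"] by auto
      then show ?thesis using False by simp
    qed
  qed
  also have "\<dots> = (\<Sum>a\<in>GK k. \<Sum>g\<in>carrier G. \<Sum>b\<in>GK k. of_bool (unc k a b g))"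
    by (intro sum.cong refl) (rule sum.swap)
  also have "\<dots> = (\<Sum>g\<in>carrier G. \<Sum>a\<in>GK k. \<Sum>b\<in>GK k. of_bool (unc k a b g))"
    by (rule sum.swap)
  also have "\<dots> = (\<Sum>g\<in>carrier G. real nG ^ (2*k) * pr k g)"
    using n0 by (intro sum.cong refl) (simp add: pr_alt)
  also have "\<dots> = real nG ^ (2*k) * (\<Sum>g\<in>carrier G. pr k g)"
    by (simp add: sum_distrib_left)
  finally show ?thesis unfolding Pcov_sum using n0 by (simp add: field_simps)
qed

lemma low_main:
  fixes k :: nat
  defines "\<mu> \<equiv> (\<Sum>g\<in>carrier G. pr k g)"
  assumes \<mu>0: "\<mu> > 0"
  shows "Pcov G k \<le> (\<Sum>g\<in>carrier G. pr k g + (\<Sum>h\<in>carrier G - {g}. pr2 k g h)) / \<mu>^2 - 1"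
proof -
  have n0: "real nG ^ (2*k) > 0" using nG_pos by simp
  define U where "U a b g = (of_bool (unc k a b g) :: real)" for a b g
  define X where "X a b = (\<Sum>g\<in>carrier G. U a b g)" for a b
  have pt: "of_bool (\<forall>g\<in>carrier G. \<not> unc k a b g) \<le> (X a b - \<mu>)^2 / \<mu>^2" for a b
  proof (cases "\<forall>g\<in>carrier G. \<not> unc k a b g")
    case True
    then have "X a b = 0" unfolding X_def U_def by simp
    then show ?thesis using True \<mu>0 by simp
  next
    case False
    then have z: "of_bool (\<forall>g\<in>carrier G. \<not> unc k a b g) = (0::real)" by simp
    have "0 \<le> (X a b - \<mu>)^2 / \<mu>^2" by simp
    then show ?thesis using z by linarith
  qed
  have sX: "(\<Sum>a\<in>GK k. \<Sum>b\<in>GK k. X a b) = real nG ^ (2*k) * \<mu>"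
  proof -
    have "(\<Sum>a\<in>GK k. \<Sum>b\<in>GK k. X a b) = (\<Sum>g\<in>carrier G. \<Sum>a\<in>GK k. \<Sum>b\<in>GK k. U a b g)"
      unfolding X_def by (rule triple_swap)
    also have "\<dots> = (\<Sum>g\<in>carrier G. real nG ^ (2*k) * pr k g)"
      using n0 unfolding U_def by (intro sum.cong refl) (simp add: pr_alt)
    finally show ?thesis unfolding \<mu>_def by (simp add: sum_distrib_left)
  qed
  have X2: "X a b ^ 2 = (\<Sum>g\<in>carrier G. U a b g + (\<Sum>h\<in>carrier G - {g}. U a b g * U a b h))" for a b
  proof -
    have "X a b ^ 2 = (\<Sum>g\<in>carrier G. \<Sum>h\<in>carrier G. U a b g * U a b h)"
      unfolding X_def power2_eq_square by (simp add: sum_product)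
    also have "\<dots> = (\<Sum>g\<in>carrier G. U a b g * U a b g + (\<Sum>h\<in>carrier G - {g}. U a b g * U a b h))"
      by (intro sum.cong refl) (simp add: sum.remove)
    also have "\<dots> = (\<Sum>g\<in>carrier G. U a b g + (\<Sum>h\<in>carrier G - {g}. U a b g * U a b h))"
      unfolding U_def by (intro sum.cong refl arg_cong2[where f="(+)"]) (simp_all add: of_bool_def)
    finally show ?thesis .
  qed
  have sX2: "(\<Sum>a\<in>GK k. \<Sum>b\<in>GK k. X a b ^ 2) = real nG ^ (2*k) * (\<Sum>g\<in>carrier G. pr k g + (\<Sum>h\<in>carrier G - {g}. pr2 k g h))"
  proof -
    have "(\<Sum>a\<in>GK k. \<Sum>b\<in>GK k. X a b ^ 2) = (\<Sum>a\<in>GK k. \<Sum>b\<in>GK k. \<Sum>g\<in>carrier G. U a b g + (\<Sum>h\<in>carrier G - {g}. U a b g * U a b h))"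
      by (simp only: X2)
    also have "\<dots> = (\<Sum>g\<in>carrier G. \<Sum>a\<in>GK k. \<Sum>b\<in>GK k. U a b g + (\<Sum>h\<in>carrier G - {g}. U a b g * U a b h))"
      by (rule triple_swap)
    also have "\<dots> = (\<Sum>g\<in>carrier G. (\<Sum>a\<in>GK k. \<Sum>b\<in>GK k. U a b g) + (\<Sum>h\<in>carrier G - {g}. \<Sum>a\<in>GK k. \<Sum>b\<in>GK k. U a b g * U a b h))"
    proof (rule sum.cong[OF refl])
      fix g
      have "(\<Sum>a\<in>GK k. \<Sum>b\<in>GK k. U a b g + (\<Sum>h\<in>carrier G - {g}. U a b g * U a b h))
          = (\<Sum>a\<in>GK k. \<Sum>b\<in>GK k. U a b g) + (\<Sum>a\<in>GK k. \<Sum>b\<in>GK k. \<Sum>h\<in>carrier G - {g}. U a b g * U a b h)"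
        by (simp only: sum.distrib)
      also have "(\<Sum>a\<in>GK k. \<Sum>b\<in>GK k. \<Sum>h\<in>carrier G - {g}. U a b g * U a b h) = (\<Sum>h\<in>carrier G - {g}. \<Sum>a\<in>GK k. \<Sum>b\<in>GK k. U a b g * U a b h)"
        by (rule triple_swap)
      finally show "(\<Sum>a\<in>GK k. \<Sum>b\<in>GK k. U a b g + (\<Sum>h\<in>carrier G - {g}. U a b g * U a b h))
          = (\<Sum>a\<in>GK k. \<Sum>b\<in>GK k. U a b g) + (\<Sum>h\<in>carrier G - {g}. \<Sum>a\<in>GK k. \<Sum>b\<in>GK k. U a b g * U a b h)" .
    qed
    also have "\<dots> = (\<Sum>g\<in>carrier G. real nG ^ (2*k) * pr k g + (\<Sum>h\<in>carrier G - {g}. real nG ^ (2*k) * pr2 k g h))"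
      using n0 unfolding U_def by (intro sum.cong refl arg_cong2[where f="(+)"]) (auto simp: pr_alt pr2_alt)
    finally show ?thesis by (simp add: sum_distrib_left distrib_left)
  qed
  have num: "(\<Sum>a\<in>GK k. \<Sum>b\<in>GK k. (X a b - \<mu>)^2) = real nG ^ (2*k) * (\<Sum>g\<in>carrier G. pr k g + (\<Sum>h\<in>carrier G - {g}. pr2 k g h)) - 2 * \<mu> * (real nG ^ (2*k) * \<mu>) + \<mu>^2 * real nG ^ (2*k)"
  proof -
    have "(\<Sum>a\<in>GK k. \<Sum>b\<in>GK k. (X a b - \<mu>)^2) = (\<Sum>a\<in>GK k. \<Sum>b\<in>GK k. X a b ^ 2 - 2 * \<mu> * X a b + \<mu>^2)"
      by (intro sum.cong refl) (simp add: power2_diff algebra_simps)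
    also have "\<dots> = (\<Sum>a\<in>GK k. \<Sum>b\<in>GK k. X a b ^ 2) - 2 * \<mu> * (\<Sum>a\<in>GK k. \<Sum>b\<in>GK k. X a b) + \<mu>^2 * real nG ^ (2*k)"
      by (simp only: sum.distrib sum_subtractf sum_distrib_left[symmetric] sum_constant nsq) (simp add: algebra_simps)
    finally show ?thesis by (simp only: sX sX2)
  qed
  have "Pcov G k * real nG ^ (2*k) \<le> (\<Sum>a\<in>GK k. \<Sum>b\<in>GK k. (X a b - \<mu>)^2 / \<mu>^2)"
    unfolding Pcov_sum using n0 by (simp) (intro sum_mono pt)
  also have "\<dots> = (\<Sum>a\<in>GK k. \<Sum>b\<in>GK k. (X a b - \<mu>)^2) / \<mu>^2"
    by (simp add: sum_divide_distrib)
  also have "\<dots> = real nG ^ (2*k) * ((\<Sum>g\<in>carrier G. pr k g + (\<Sum>h\<in>carrier G - {g}. pr2 k g h)) / \<mu>^2 - 1)"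
    unfolding num using \<mu>0 by (simp add: field_simps power2_eq_square)
  finally show ?thesis using n0 by (simp add: mult.commute)
qed

end

context fgrp begin

lemma cnt_pos: "g \<in> carrier G \<Longrightarrow> cnt g > 0"
  unfolding cnt_def centr_def
  by (metis (mono_tags, lifting) card_gt_0_iff empty_iff fin finite_subset l_one mem_Collect_eq one_closed r_one subsetI)

lemma cnt_one: "cnt \<one> = nG"
proof -
  have "{g\<in>carrier G. g \<otimes> \<one> = \<one> \<otimes> g} = carrier G" by auto
  then show ?thesis unfolding cnt_def centr_def by simp
qed

lemma theta_prop:
  assumes n2: "nG \<ge> 2"
  shows "1/2 \<le> Theta G" "Theta G \<le> 1"
    "(\<Sum>g\<in>carrier G. exp (- Theta G * ln nG * (2 - cnt g / nG))) = 1"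
proof -
  define L where "L = ln (real nG)"
  have L0: "L > 0" unfolding L_def using n2 by simp
  define S where "S \<xi> = (\<Sum>x\<in>carrier G. exp (\<xi> * L * real (card (centr G x)) / real nG))" for \<xi>
  define F where "F \<xi> = 2 * \<xi> * L - ln (S \<xi>)" for \<xi>
  have Spos: "S \<xi> > 0" for \<xi> unfolding S_def by (rule sum_pos) auto
  have c1: "real (card (centr G x)) / real nG \<le> 1" for x using cnt_le[of x] nG_pos unfolding cnt_def by simp
  have c0: "real (card (centr G x)) / real nG \<ge> 0" for x by simp
  have Theta_eq: "Theta G = (THE \<xi>. \<xi> \<in> {1/2..1} \<and> F \<xi> = 0)"
    unfolding Theta_def F_def S_def L_def Let_def by (simp add: eq_diff_eq)
  have mono: "F \<xi>1 < F \<xi>2" if "\<xi>1 < \<xi>2" for \<xi>1 \<xi>2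
  proof -
    have "S \<xi>2 \<le> S \<xi>1 * exp ((\<xi>2 - \<xi>1) * L)"
      unfolding S_def sum_distrib_right
    proof (rule sum_mono)
      fix x
      have "\<xi>2 * L * real (card (centr G x)) / real nG = \<xi>1 * L * real (card (centr G x)) / real nG + (\<xi>2 - \<xi>1) * L * (real (card (centr G x)) / real nG)"
        using nG_pos by (simp add: field_simps)
      also have "\<dots> \<le> \<xi>1 * L * real (card (centr G x)) / real nG + (\<xi>2 - \<xi>1) * L"
        using that L0 c1[of x] by (intro add_left_mono mult_right_le_one_le) auto
      finally show "exp (\<xi>2 * L * real (card (centr G x)) / real nG) \<le> exp (\<xi>1 * L * real (card (centr G x)) / real nG) * exp ((\<xi>2 - \<xi>1) * L)"
        by (simp add: exp_add[symmetric])
    qed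
    then have "ln (S \<xi>2) \<le> ln (S \<xi>1 * exp ((\<xi>2 - \<xi>1) * L))"
      using Spos by (subst ln_le_cancel_iff) auto
    also have "\<dots> = ln (S \<xi>1) + (\<xi>2 - \<xi>1) * L" using Spos[of \<xi>1] by (simp add: ln_mult)
    finally have l: "ln (S \<xi>2) \<le> ln (S \<xi>1) + (\<xi>2 - \<xi>1) * L" .
    have p: "(\<xi>2 - \<xi>1) * L > 0" using that L0 by simp
    have e: "2 * \<xi>2 * L - 2 * \<xi>1 * L = 2 * ((\<xi>2 - \<xi>1) * L)" by (simp add: algebra_simps)
    show ?thesis unfolding F_def using l p e by linarith
  qed
  have F1: "F (1/2) < 0"
  proof -
    have "S (1/2) > real nG"
    proof -
      have "(\<Sum>x\<in>carrier G. 1) < (\<Sum>x\<in>carrier G. exp (1/2 * L * real (card (centr G x)) / real nG))"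
      proof (rule sum_strict_mono_ex1)
        show "\<forall>x\<in>carrier G. 1 \<le> exp (1/2 * L * real (card (centr G x)) / real nG)"
          using L0 by (auto intro: mult_nonneg_nonneg divide_nonneg_pos)
        have "exp (1/2 * L * real (card (centr G \<one>)) / real nG) = exp (L/2)"
          using cnt_one nG_pos unfolding cnt_def by simp
        then show "\<exists>x\<in>carrier G. 1 < exp (1/2 * L * real (card (centr G x)) / real nG)"
          using L0 by (intro bexI[of _ \<one>]) auto
      qed auto
      then show ?thesis unfolding S_def by simp
    qed
    then have "ln (S (1/2)) > L" unfolding L_def using nG_pos by (simp add: ln_less_cancel_iff)
    then show ?thesis unfolding F_def by simp
  qed
  have F2: "F 1 \<ge> 0"
  proof -
    have "S 1 \<le> (\<Sum>x\<in>carrier G. exp L)" unfolding S_def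
    proof (intro sum_mono)
      fix x
      have "L * (real (card (centr G x)) / real nG) \<le> L * 1" using L0 c1[of x] by (intro mult_left_mono) auto
      then show "exp (1 * L * real (card (centr G x)) / real nG) \<le> exp L" by simp
    qed
    also have "\<dots> = real nG * real nG" unfolding L_def using nG_pos by simp
    finally have "ln (S 1) \<le> ln (real nG * real nG)" using Spos[of 1] by (subst ln_le_cancel_iff) auto
    also have "\<dots> = 2 * L" unfolding L_def using nG_pos by (simp add: ln_mult)
    finally show ?thesis unfolding F_def by simp
  qed
  have cont: "\<forall>x. 1/2 \<le> x \<and> x \<le> 1 \<longrightarrow> isCont F x"
  proof (intro allI impI)
    fix x :: real
    have ne: "(\<Sum>xa\<in>carrier G. exp (x * L * real (card (centr G xa)) / real nG)) \<noteq> 0"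
      using Spos[of x] unfolding S_def by simp
    show "isCont F x" unfolding F_def S_def using ne by (intro continuous_intros) auto
  qed
  obtain \<xi>0 where \<xi>0: "1/2 \<le> \<xi>0" "\<xi>0 \<le> 1" "F \<xi>0 = 0"
    using IVT[of F "1/2" 0 1] F1 F2 cont by force
  have uniq: "\<xi> = \<xi>0" if "\<xi> \<in> {1/2..1} \<and> F \<xi> = 0" for \<xi>
    using mono[of \<xi> \<xi>0] mono[of \<xi>0 \<xi>] that \<xi>0 by (cases "\<xi> < \<xi>0"; cases "\<xi>0 < \<xi>") auto
  have th: "Theta G = \<xi>0" unfolding Theta_eq
  proof (rule the_equality)
    show "\<xi>0 \<in> {1/2..1} \<and> F \<xi>0 = 0" using \<xi>0 by simp
  next
    fix \<xi> assume "\<xi> \<in> {1/2..1} \<and> F \<xi> = 0" then show "\<xi> = \<xi>0" by (rule uniq)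
  qed
  show "1/2 \<le> Theta G" "Theta G \<le> 1" using th \<xi>0 by auto
  have "ln (S \<xi>0) = 2 * \<xi>0 * L" using \<xi>0 unfolding F_def by simp
  then have SE: "S \<xi>0 = exp (2 * \<xi>0 * L)" using Spos by (metis exp_ln)
  have "(\<Sum>g\<in>carrier G. exp (- \<xi>0 * L * (2 - cnt g / nG))) = (\<Sum>g\<in>carrier G. exp (- 2 * \<xi>0 * L) * exp (\<xi>0 * L * real (card (centr G g)) / real nG))"
  proof (rule sum.cong[OF refl])
    fix g
    have arg: "- \<xi>0 * L * (2 - real (cnt g) / real nG) = - 2 * \<xi>0 * L + \<xi>0 * L * real (card (centr G g)) / real nG"
      unfolding cnt_def by (simp add: right_diff_distrib)
    show "exp (- \<xi>0 * L * (2 - real (cnt g) / real nG)) = exp (- 2 * \<xi>0 * L) * exp (\<xi>0 * L * real (card (centr G g)) / real nG)"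
      unfolding arg by (rule exp_add)
  qed
  also have "\<dots> = exp (- 2 * \<xi>0 * L) * S \<xi>0" unfolding S_def by (simp add: sum_distrib_left)
  also have "\<dots> = 1" unfolding SE by (simp add: exp_add[symmetric])
  finally show "(\<Sum>g\<in>carrier G. exp (- Theta G * ln nG * (2 - cnt g / nG))) = 1"
    unfolding th L_def .
qed

end

declare sum_of_bool_eq[simp del] sum_of_bool_mult_eq[simp del] sum_mult_of_bool_eq[simp del]

context fgrp begin

lemma up_bound:
  fixes k :: nat
  assumes n2: "nG \<ge> 2"
  defines "t \<equiv> real k / nG" and "\<kappa> \<equiv> real k ^ 2 / nG" and "\<xi> \<equiv> Theta G" and "L \<equiv> ln (real nG)"
  assumes big: "\<kappa> \<ge> \<xi> * L"
  shows "1 - Pcov G k \<le> exp (10 * (\<kappa> * t * exp (20*t)) - (\<kappa> - \<xi> * L))"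
proof -
  define X where "X = 10 * (\<kappa> * t * exp (20*t)) - (\<kappa> - \<xi> * L)"
  have "1 - Pcov G k \<le> (\<Sum>g\<in>carrier G. pr k g)" by (rule up_main)
  also have "\<dots> \<le> (\<Sum>g\<in>carrier G. exp (- \<xi> * L * (2 - cnt g / nG) + X))"
  proof (rule sum_mono)
    fix g assume g: "g \<in> carrier G"
    define c where "c = cnt g / nG"
    have c1: "c \<le> 1" using cnt_le[of g] nG_pos unfolding c_def by simp
    have "(\<kappa> - \<xi> * L) * 1 \<le> (\<kappa> - \<xi> * L) * (2 - c)"
      using big c1 by (intro mult_left_mono) auto
    then have "- \<kappa> * (2 - c) + 10 * (\<kappa> * t * exp (20*t)) \<le> - \<xi> * L * (2 - c) + X"
      unfolding X_def by (simp add: algebra_simps)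
    then have "exp (- \<kappa> * (2 - cnt g / nG) + 10 * (\<kappa> * t * exp (20*t))) \<le> exp (- \<xi> * L * (2 - cnt g / nG) + X)"
      unfolding c_def by simp
    with pr_up2[OF g, of k] show "pr k g \<le> exp (- \<xi> * L * (2 - cnt g / nG) + X)"
      unfolding t_def \<kappa>_def by linarith
  qed
  also have "\<dots> = (\<Sum>g\<in>carrier G. exp X * exp (- \<xi> * L * (2 - cnt g / nG)))"
    by (intro sum.cong refl) (simp only: exp_add mult.commute)
  also have "\<dots> = exp X * (\<Sum>g\<in>carrier G. exp (- \<xi> * L * (2 - cnt g / nG)))"
    by (simp add: sum_distrib_left)
  also have "(\<Sum>g\<in>carrier G. exp (- \<xi> * L * (2 - cnt g / nG))) = 1"
    unfolding \<xi>_def L_def by (rule theta_prop(3)[OF n2])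
  finally show ?thesis unfolding X_def by simp
qed

lemma pair_bound:
  fixes k :: nat and \<delta> :: real
  assumes g: "g \<in> carrier G" and h: "h \<in> carrier G" and gh: "g \<noteq> h" and \<delta>: "\<delta> > 0" and k4: "4 * k \<le> nG"
  defines "t \<equiv> real k / nG" and "\<kappa> \<equiv> real k ^ 2 / nG"
  defines "\<omega> \<equiv> \<kappa> * t * exp (20*t)"
  defines "\<eta> \<equiv> 96 * \<omega> + 18 * (\<kappa> * t) + 2 * \<delta>" and "\<beta> \<equiv> exp (- \<kappa> / 2 + 96 * \<omega> + 9 * (\<kappa> * t))"
  shows "pr2 k g h \<le> exp \<eta> * pr k g * pr k h + of_bool (E1 g h > 0 \<and> \<delta> < \<kappa> * (cnt g / nG)) * \<beta> * pr k g"
proof -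
  define cg where "cg = cnt g / nG"
  define ch where "ch = cnt h / nG"
  have n0: "real nG > 0" using nG_pos by simp
  have \<kappa>0: "\<kappa> \<ge> 0" unfolding \<kappa>_def by simp
  have t0: "t \<ge> 0" unfolding t_def by simp
  have lowg: "exp (- \<kappa> * (2 - cg)) \<le> pr k g * exp (9 * (\<kappa> * t))"
  proof -
    have "exp (- \<kappa> * (2 - cg) - 9 * (\<kappa> * t)) \<le> pr k g" using pr_low[OF g k4] unfolding cg_def t_def \<kappa>_def .
    then have "exp (- \<kappa> * (2 - cg) - 9 * (\<kappa> * t)) * exp (9 * (\<kappa> * t)) \<le> pr k g * exp (9 * (\<kappa> * t))"
      by (intro mult_right_mono) auto
    then show ?thesis by (simp add: exp_diff)
  qed
  have lowh: "exp (- \<kappa> * (2 - ch)) \<le> pr k h * exp (9 * (\<kappa> * t))"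
  proof -
    have "exp (- \<kappa> * (2 - ch) - 9 * (\<kappa> * t)) \<le> pr k h" using pr_low[OF h k4] unfolding ch_def t_def \<kappa>_def .
    then have "exp (- \<kappa> * (2 - ch) - 9 * (\<kappa> * t)) * exp (9 * (\<kappa> * t)) \<le> pr k h * exp (9 * (\<kappa> * t))"
      by (intro mult_right_mono) auto
    then show ?thesis by (simp add: exp_diff)
  qed
  have up: "pr2 k g h \<le> exp (- 4 * \<kappa> + \<kappa> * (real (cnt g + cnt h + E1 g h + E2 g h) / nG) + 96 * \<omega>)"
    using pr2_up2[OF g h gh, of k] unfolding \<omega>_def t_def \<kappa>_def .
  have prg0: "pr k g \<ge> 0" "pr k h \<ge> 0" using pr_nonneg g h by auto
  have \<beta>0: "\<beta> \<ge> 0" unfolding \<beta>_def by simp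
  show ?thesis
  proof (cases "E1 g h > 0 \<and> \<delta> < \<kappa> * (cnt g / nG)")
    case True
    have cc: "cnt g = cnt h" "E1 g h \<le> cnt g" using cnt_conj[OF g h] True by auto
    have e2: "E2 g h = E1 g h" using E2_eq_E1[OF g h] .
    have half: "2 * cnt g \<le> nG" using noncentral_half[OF g h gh[symmetric]] True by auto
    have "real (cnt g + cnt h + E1 g h + E2 g h) \<le> 4 * cnt g" using cc e2 by simp
    then have N: "real (cnt g + cnt h + E1 g h + E2 g h) / nG \<le> 4 * cg" unfolding cg_def using n0 by (simp add: divide_right_mono)
    have cg2: "cg \<le> 1/2" unfolding cg_def using half n0 by (simp add: field_simps)
    have "- 4 * \<kappa> + \<kappa> * (real (cnt g + cnt h + E1 g h + E2 g h) / nG) + 96 * \<omega> \<le> (- \<kappa> / 2) + (- \<kappa> * (2 - cg)) + 96 * \<omega>"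
    proof -
      have "\<kappa> * (real (cnt g + cnt h + E1 g h + E2 g h) / nG) \<le> \<kappa> * (4 * cg)" using N \<kappa>0 by (rule mult_left_mono)
      moreover have "\<kappa> * (3 * cg) \<le> \<kappa> * (3/2)" using cg2 \<kappa>0 by (intro mult_left_mono) auto
      ultimately show ?thesis by (simp add: algebra_simps)
    qed
    then have "exp (- 4 * \<kappa> + \<kappa> * (real (cnt g + cnt h + E1 g h + E2 g h) / nG) + 96 * \<omega>) \<le> exp ((- \<kappa> / 2) + (- \<kappa> * (2 - cg)) + 96 * \<omega>)"
      by (simp only: exp_le_cancel_iff)
    also have "\<dots> = exp (- \<kappa> / 2 + 96 * \<omega>) * exp (- \<kappa> * (2 - cg))"
      by (subst exp_add[symmetric]) (simp add: algebra_simps)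
    finally have "pr2 k g h \<le> exp (- \<kappa> / 2 + 96 * \<omega>) * exp (- \<kappa> * (2 - cg))"
      using up by linarith
    also have "\<dots> \<le> exp (- \<kappa> / 2 + 96 * \<omega>) * (pr k g * exp (9 * (\<kappa> * t)))"
      using lowg by (intro mult_left_mono) auto
    also have "\<dots> = \<beta> * pr k g" unfolding \<beta>_def by (simp add: exp_add)
    finally have "pr2 k g h \<le> \<beta> * pr k g" .
    moreover have "exp \<eta> * pr k g * pr k h \<ge> 0" using prg0 by simp
    moreover have z: "of_bool (E1 g h > 0 \<and> \<delta> < \<kappa> * (cnt g / nG)) = (1::real)" using True by (simp only: of_bool_eq_1_iff)
    ultimately show ?thesis unfolding z by simp
  next
    case False
    have N: "\<kappa> * (real (cnt g + cnt h + E1 g h + E2 g h) / nG) \<le> \<kappa> * (cg + ch) + 2 * \<delta>"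
    proof (cases "E1 g h > 0")
      case True
      with False have sm: "\<kappa> * cg \<le> \<delta>" unfolding cg_def by auto
      have cc: "cnt g = cnt h" "E1 g h \<le> cnt g" using cnt_conj[OF g h] True by auto
      have e2: "E2 g h = E1 g h" using E2_eq_E1[OF g h] .
      have "real (cnt g + cnt h + E1 g h + E2 g h) \<le> real (cnt g) + real (cnt h) + 2 * real (cnt g)" using cc e2 by simp
      then have "real (cnt g + cnt h + E1 g h + E2 g h) / nG \<le> (real (cnt g) + real (cnt h) + 2 * real (cnt g)) / nG"
        using n0 by (intro divide_right_mono) auto
      also have "\<dots> = cg + ch + 2 * cg" unfolding cg_def ch_def by (simp add: add_divide_distrib)
      finally have "real (cnt g + cnt h + E1 g h + E2 g h) / nG \<le> cg + ch + 2 * cg" .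
      then have "\<kappa> * (real (cnt g + cnt h + E1 g h + E2 g h) / nG) \<le> \<kappa> * (cg + ch + 2 * cg)"
        using \<kappa>0 by (rule mult_left_mono)
      then show ?thesis using sm by (simp add: algebra_simps)
    next
      case False
      then have "E1 g h = 0" by simp
      moreover then have "E2 g h = 0" using E2_eq_E1[OF g h] by simp
      ultimately have "real (cnt g + cnt h + E1 g h + E2 g h) / nG = cg + ch"
        unfolding cg_def ch_def by (simp add: add_divide_distrib)
      then show ?thesis using \<delta> by (simp add: algebra_simps)
    qed
    have "- 4 * \<kappa> + \<kappa> * (real (cnt g + cnt h + E1 g h + E2 g h) / nG) + 96 * \<omega> \<le> (- \<kappa> * (2 - cg)) + (- \<kappa> * (2 - ch)) + (96 * \<omega> + 2 * \<delta>)"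
      using N by (simp add: algebra_simps)
    then have "exp (- 4 * \<kappa> + \<kappa> * (real (cnt g + cnt h + E1 g h + E2 g h) / nG) + 96 * \<omega>) \<le> exp ((- \<kappa> * (2 - cg)) + (- \<kappa> * (2 - ch)) + (96 * \<omega> + 2 * \<delta>))"
      by (simp only: exp_le_cancel_iff)
    also have "\<dots> = exp (- \<kappa> * (2 - cg)) * exp (- \<kappa> * (2 - ch)) * exp (96 * \<omega> + 2 * \<delta>)"
      by (simp only: exp_add)
    finally have "pr2 k g h \<le> exp (- \<kappa> * (2 - cg)) * exp (- \<kappa> * (2 - ch)) * exp (96 * \<omega> + 2 * \<delta>)"
      using up by linarith
    also have "\<dots> \<le> (pr k g * exp (9 * (\<kappa> * t))) * (pr k h * exp (9 * (\<kappa> * t))) * exp (96 * \<omega> + 2 * \<delta>)"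
      using lowg lowh prg0 by (intro mult_right_mono mult_mono) auto
    also have "\<dots> = exp \<eta> * pr k g * pr k h" unfolding \<eta>_def by (simp add: exp_add[symmetric] algebra_simps)
    finally have r: "pr2 k g h \<le> exp \<eta> * pr k g * pr k h" .
    have z: "of_bool (E1 g h > 0 \<and> \<delta> < \<kappa> * (cnt g / nG)) = (0::real)" using False by (simp only: of_bool_eq_0_iff) simp
    show ?thesis unfolding z using r by simp
  qed
qed

end

declare sum_of_bool_eq[simp del] sum_of_bool_mult_eq[simp del] sum_mult_of_bool_eq[simp del]

context fgrp begin

lemma low_bound:
  fixes k :: nat and \<delta> :: real
  assumes \<delta>: "\<delta> > 0" and k4: "4 * k \<le> nG"
  defines "t \<equiv> real k / nG" and "\<kappa> \<equiv> real k ^ 2 / nG"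
  defines "\<omega> \<equiv> \<kappa> * t * exp (20*t)"
  defines "\<eta> \<equiv> 96 * \<omega> + 18 * (\<kappa> * t) + 2 * \<delta>" and "\<beta> \<equiv> exp (- \<kappa> / 2 + 96 * \<omega> + 9 * (\<kappa> * t))"
  defines "\<mu> \<equiv> (\<Sum>g\<in>carrier G. pr k g)"
  shows "\<mu> > 0" "Pcov G k \<le> 1/\<mu> + (exp \<eta> - 1) + (\<kappa>/\<delta>) * \<beta> / \<mu>"
proof -
  have n0: "real nG > 0" using nG_pos by simp
  have \<kappa>0: "\<kappa> \<ge> 0" unfolding \<kappa>_def by simp
  have prpos: "pr k g > 0" if "g \<in> carrier G" for g
    using pr_low[OF that k4] by (meson exp_gt_zero less_le_trans)
  show \<mu>0: "\<mu> > 0" unfolding \<mu>_def by (rule sum_pos) (auto intro: prpos)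
  have \<beta>0: "\<beta> \<ge> 0" unfolding \<beta>_def by simp
  have inner: "(\<Sum>h\<in>carrier G - {g}. pr2 k g h) \<le> exp \<eta> * pr k g * \<mu> + (\<kappa>/\<delta>) * \<beta> * pr k g"
    if g: "g \<in> carrier G" for g
  proof -
    define B where "B h = (of_bool (E1 g h > 0 \<and> \<delta> < \<kappa> * (cnt g / nG)) :: real)" for h
    have "(\<Sum>h\<in>carrier G - {g}. pr2 k g h) \<le> (\<Sum>h\<in>carrier G - {g}. exp \<eta> * pr k g * pr k h + B h * \<beta> * pr k g)"
    proof (rule sum_mono)
      fix h assume h: "h \<in> carrier G - {g}"
      show "pr2 k g h \<le> exp \<eta> * pr k g * pr k h + B h * \<beta> * pr k g"
        unfolding B_def \<eta>_def \<beta>_def \<omega>_def \<kappa>_def t_def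
        by (rule pair_bound[OF g _ _ \<delta> k4]) (use h in auto)
    qed
    also have "\<dots> = exp \<eta> * pr k g * (\<Sum>h\<in>carrier G - {g}. pr k h) + (\<Sum>h\<in>carrier G - {g}. B h) * (\<beta> * pr k g)"
      by (simp add: sum.distrib sum_distrib_left sum_distrib_right mult.assoc)
    also have "(\<Sum>h\<in>carrier G - {g}. pr k h) \<le> \<mu>"
      unfolding \<mu>_def by (rule sum_mono2) (auto intro: less_imp_le prpos)
    also have "(\<Sum>h\<in>carrier G - {g}. B h) \<le> \<kappa>/\<delta>"
    proof (cases "\<delta> < \<kappa> * (cnt g / nG)")
      case True
      have "(\<Sum>h\<in>carrier G - {g}. B h) \<le> (\<Sum>h\<in>carrier G - {g}. of_bool (E1 g h > 0))"
        unfolding B_def by (rule sum_mono) auto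
      also have "\<dots> \<le> (\<Sum>h\<in>carrier G. of_bool (E1 g h > 0))"
        by (rule sum_mono2) auto
      also have "\<dots> = real (card {h\<in>carrier G. E1 g h > 0})"
        by (simp add: sum_of_bool_eq Int_def)
      also have "\<dots> \<le> real nG / real (cnt g)"
        using count_conj[OF g] cnt_pos[OF g] by (simp add: le_divide_eq of_nat_mult[symmetric] del: of_nat_mult)
      also have "\<dots> \<le> \<kappa>/\<delta>"
      proof -
        have "\<delta> * real nG < \<kappa> * real (cnt g)" using True n0 by (simp add: field_simps)
        then show ?thesis using \<delta> cnt_pos[OF g] n0 by (simp add: field_simps)
      qed
      finally show ?thesis .
    next
      case False
      then have "(\<Sum>h\<in>carrier G - {g}. B h) = 0" unfolding B_def by simp
      then show ?thesis using \<kappa>0 \<delta> by simp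
    qed
    finally show ?thesis using \<beta>0 prpos[OF g] \<mu>0 by (simp add: mult_left_mono mult_right_mono algebra_simps)
  qed
  have S2: "(\<Sum>g\<in>carrier G. pr k g + (\<Sum>h\<in>carrier G - {g}. pr2 k g h)) \<le> \<mu> + exp \<eta> * \<mu> * \<mu> + (\<kappa>/\<delta>) * \<beta> * \<mu>"
  proof -
    have "(\<Sum>g\<in>carrier G. pr k g + (\<Sum>h\<in>carrier G - {g}. pr2 k g h)) \<le> (\<Sum>g\<in>carrier G. pr k g + (exp \<eta> * pr k g * \<mu> + (\<kappa>/\<delta>) * \<beta> * pr k g))"
      by (intro sum_mono add_left_mono inner)
    also have "\<dots> = \<mu> + exp \<eta> * \<mu> * \<mu> + (\<kappa>/\<delta>) * \<beta> * \<mu>"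
      unfolding \<mu>_def by (simp add: sum.distrib sum_distrib_left sum_distrib_right algebra_simps)
    finally show ?thesis .
  qed
  have "Pcov G k \<le> (\<Sum>g\<in>carrier G. pr k g + (\<Sum>h\<in>carrier G - {g}. pr2 k g h)) / \<mu>^2 - 1"
    using low_main[of k] \<mu>0 unfolding \<mu>_def by simp
  also have "\<dots> \<le> (\<mu> + exp \<eta> * \<mu> * \<mu> + (\<kappa>/\<delta>) * \<beta> * \<mu>) / \<mu>^2 - 1"
    using S2 \<mu>0 by (simp add: divide_right_mono)
  also have "\<dots> = 1/\<mu> + (exp \<eta> - 1) + (\<kappa>/\<delta>) * \<beta> / \<mu>"
    using \<mu>0 by (simp add: field_simps power2_eq_square)
  finally show "Pcov G k \<le> 1/\<mu> + (exp \<eta> - 1) + (\<kappa>/\<delta>) * \<beta> / \<mu>" .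
qed

end

context fgrp begin

lemma Pcov_zero: "Pcov G 0 = 0"
proof -
  have "\<not> (\<forall>g\<in>carrier G. \<not> unc 0 a b g)" for a b
    using one_closed unfolding unc_def setprod_def by auto
  then have z: "of_bool (\<forall>g\<in>carrier G. \<not> unc 0 a b g) = (0::real)" for a b by simp
  show ?thesis unfolding Pcov_sum z by simp
qed

lemma mu_low:
  fixes k :: nat
  assumes n2: "nG \<ge> 2" and k4: "4 * k \<le> nG"
  defines "t \<equiv> real k / nG" and "\<kappa> \<equiv> real k ^ 2 / nG" and "\<xi> \<equiv> Theta G" and "L \<equiv> ln (real nG)"
  assumes small: "\<kappa> \<le> \<xi> * L"
  shows "(\<Sum>g\<in>carrier G. pr k g) \<ge> exp (\<xi> * L - \<kappa> - 9 * (\<kappa> * t))"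
proof -
  define X where "X = \<xi> * L - \<kappa> - 9 * (\<kappa> * t)"
  have "exp X = exp X * (\<Sum>g\<in>carrier G. exp (- \<xi> * L * (2 - cnt g / nG)))"
    using theta_prop(3)[OF n2] unfolding \<xi>_def L_def by simp
  also have "\<dots> = (\<Sum>g\<in>carrier G. exp X * exp (- \<xi> * L * (2 - cnt g / nG)))"
    by (simp add: sum_distrib_left)
  also have "\<dots> = (\<Sum>g\<in>carrier G. exp (- \<xi> * L * (2 - cnt g / nG) + X))"
    by (intro sum.cong refl) (simp only: exp_add mult.commute)
  also have "\<dots> \<le> (\<Sum>g\<in>carrier G. pr k g)"
  proof (rule sum_mono)
    fix g assume g: "g \<in> carrier G"
    define c where "c = cnt g / nG"
    have c1: "c \<le> 1" using cnt_le[of g] nG_pos unfolding c_def by simp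
    have "(\<xi> * L - \<kappa>) * 1 \<le> (\<xi> * L - \<kappa>) * (2 - c)"
      using small c1 by (intro mult_left_mono) auto
    then have "- \<xi> * L * (2 - c) + X \<le> - \<kappa> * (2 - c) - 9 * (\<kappa> * t)"
      unfolding X_def by (simp add: algebra_simps)
    then have "exp (- \<xi> * L * (2 - cnt g / nG) + X) \<le> exp (- \<kappa> * (2 - cnt g / nG) - 9 * (\<kappa> * t))"
      unfolding c_def by simp
    with pr_low[OF g k4] show "exp (- \<xi> * L * (2 - cnt g / nG) + X) \<le> pr k g"
      unfolding t_def \<kappa>_def by linarith
  qed
  finally show ?thesis unfolding X_def .
qed

end

lemma part1_bound:
  fixes G :: "('a, 'b) monoid_scheme" and \<epsilon> :: real
  assumes grp: "group G" and fin: "finite (carrier G)" and n2: "card (carrier G) \<ge> 2" and e: "\<epsilon> > 0"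
  defines "n \<equiv> real (card (carrier G))"
  defines "k \<equiv> nat \<lceil>(1 + \<epsilon>) * sqrt (Theta G * n * ln n)\<rceil>"
  defines "K \<equiv> (1 + \<epsilon>) * sqrt (n * ln n) + 1"
  shows "1 - Pcov G k \<le> exp (10 * (K^3 / n^2 * exp (20 * (K / n))) - \<epsilon> * ln n)"
proof -
  interpret fgrp G by (rule fgrp.intro[OF grp]) (unfold_locales, rule fin)
  define \<xi> where "\<xi> = Theta G"
  define L where "L = ln n"
  define C where "C = sqrt (\<xi> * n * L)"
  have n0: "n \<ge> 2" unfolding n_def using n2 by simp
  have L0: "L > 0" unfolding L_def using n0 by simp
  have \<xi>1: "1/2 \<le> \<xi>" "\<xi> \<le> 1" using theta_prop[OF n2] unfolding \<xi>_def by auto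
  have C0: "C \<ge> 0" unfolding C_def using \<xi>1 n0 L0 by simp
  have CC: "C^2 = \<xi> * n * L" unfolding C_def using \<xi>1 n0 L0 by simp
  have kd: "k = nat \<lceil>(1 + \<epsilon>) * C\<rceil>" unfolding k_def C_def \<xi>_def L_def ..
  have y0: "(1 + \<epsilon>) * C \<ge> 0" using C0 e by simp
  then have ce0: "0 \<le> \<lceil>(1 + \<epsilon>) * C\<rceil>" by simp
  have kr: "real k = real_of_int \<lceil>(1 + \<epsilon>) * C\<rceil>" unfolding kd using ce0 by simp
  have kge: "real k \<ge> (1 + \<epsilon>) * C" unfolding kr by (rule le_of_int_ceiling)
  have kle: "real k \<le> (1 + \<epsilon>) * C + 1" unfolding kr using ceiling_correct[of "(1 + \<epsilon>) * C"] by linarith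
  have "C \<le> sqrt (n * L)" unfolding C_def using \<xi>1 n0 L0 by (intro real_sqrt_le_mono) (simp add: mult_le_cancel_right1 mult_right_le_one_le)
  then have kK: "real k \<le> K" unfolding K_def L_def using kle e by (smt (verit) mult_left_mono)
  define t where "t = real k / n"
  define \<kappa> where "\<kappa> = real k ^ 2 / n"
  have k0: "real k \<ge> 0" by simp
  have "real k ^ 2 \<ge> ((1 + \<epsilon>) * C)^2" using kge C0 e by (intro power_mono) auto
  moreover have "((1 + \<epsilon>) * C)^2 = (1 + \<epsilon>)^2 * (\<xi> * n * L)" using CC by (simp add: power_mult_distrib)
  ultimately have A: "(1 + \<epsilon>)^2 * (\<xi> * n * L) \<le> real k ^ 2" by simp
  have "real k ^ 2 / n \<ge> (1 + \<epsilon>)^2 * (\<xi> * n * L) / n" by (rule divide_right_mono[OF A]) (use n0 in simp)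
  moreover have "(1 + \<epsilon>)^2 * (\<xi> * n * L) / n = (1 + \<epsilon>)^2 * \<xi> * L" using n0 by (simp add: field_simps)
  ultimately have "\<kappa> \<ge> (1 + \<epsilon>)^2 * \<xi> * L" unfolding \<kappa>_def by simp
  moreover have "(1 + \<epsilon>)^2 * \<xi> * L \<ge> \<xi> * L + \<epsilon> * L"
  proof -
    have "(1 + \<epsilon>)^2 * \<xi> * L - \<xi> * L = (2 * \<epsilon> + \<epsilon>^2) * \<xi> * L" by (simp add: algebra_simps power2_eq_square)
    also have "\<dots> \<ge> (2 * \<epsilon>) * (1/2) * L" using e \<xi>1 L0 by (intro mult_right_mono mult_mono) auto
    finally show ?thesis by simp
  qed
  moreover have "\<epsilon> * L > 0" using e L0 by simp
  ultimately have big: "\<kappa> \<ge> \<xi> * L" and gap: "\<kappa> - \<xi> * L \<ge> \<epsilon> * L" by linarith+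
  have "1 - Pcov G k \<le> exp (10 * (\<kappa> * t * exp (20*t)) - (\<kappa> - \<xi> * L))"
    using up_bound[OF n2, of k] big unfolding t_def \<kappa>_def \<xi>_def L_def n_def by simp
  also have "\<dots> \<le> exp (10 * (K^3 / n^2 * exp (20 * (K / n))) - \<epsilon> * ln n)"
  proof -
    have "\<kappa> * t = real k ^ 3 / n^2" unfolding \<kappa>_def t_def by (simp add: power2_eq_square power3_eq_cube)
    also have "\<dots> \<le> K^3 / n^2" using kK k0 n0 by (intro divide_right_mono power_mono) auto
    finally have a: "\<kappa> * t \<le> K^3 / n^2" .
    have "t \<le> K / n" unfolding t_def using kK n0 by (simp add: divide_right_mono)
    then have b: "exp (20*t) \<le> exp (20 * (K / n))" by simp
    have "\<kappa> * t * exp (20*t) \<le> K^3 / n^2 * exp (20 * (K / n))"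
      using a b kK k0 by (intro mult_mono) (auto simp: \<kappa>_def t_def)
    then show ?thesis using gap unfolding L_def by simp
  qed
  finally show ?thesis .
qed

lemma part2_bound:
  fixes G :: "('a, 'b) monoid_scheme" and \<epsilon> :: real
  assumes grp: "group G" and fin: "finite (carrier G)" and n2: "card (carrier G) \<ge> 2"
    and e: "\<epsilon> > 0" and e1: "\<epsilon> < 1"
  defines "n \<equiv> real (card (carrier G))"
  assumes c1: "4 * sqrt (n * ln n) \<le> n" and c2: "(1 - \<epsilon>) * sqrt (n * ln n / 2) \<ge> 2"
  defines "k \<equiv> nat \<lfloor>(1 - \<epsilon>) * sqrt (Theta G * n * ln n)\<rfloor>"
  defines "A \<equiv> sqrt (n * ln n)^3 / n^2"
  defines "\<Omega> \<equiv> A * exp (20 * (sqrt (n * ln n) / n))"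
  defines "\<gamma> \<equiv> (1 - \<epsilon>)^2 / 8"
  defines "M \<equiv> exp (\<epsilon>/2 * ln n - 9 * A)"
  shows "Pcov G k \<le> 1/M + (exp (96*\<Omega> + 18*A + 2/ln n) - 1) + (ln n)^2 * exp (-(\<gamma>/2) * ln n) * exp (96*\<Omega> + 9*A) / M"
proof -
  interpret fgrp G by (rule fgrp.intro[OF grp]) (unfold_locales, rule fin)
  define \<xi> where "\<xi> = Theta G"
  define L where "L = ln n"
  define C where "C = sqrt (\<xi> * n * L)"
  define a where "a = (1 - \<epsilon>) * C"
  define s where "s = sqrt (n * L)"
  have n0: "n \<ge> 2" unfolding n_def using n2 by simp
  have L0: "L > 0" unfolding L_def using n0 by simp
  have \<xi>1: "1/2 \<le> \<xi>" "\<xi> \<le> 1" using theta_prop[OF n2] unfolding \<xi>_def by auto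
  have C0: "C \<ge> 0" unfolding C_def using \<xi>1 n0 L0 by simp
  have CC: "C^2 = \<xi> * n * L" unfolding C_def using \<xi>1 n0 L0 by simp
  have a0: "a \<ge> 0" unfolding a_def using C0 e1 by simp
  have kd: "k = nat \<lfloor>a\<rfloor>" unfolding k_def a_def C_def \<xi>_def L_def ..
  have kr: "real k = real_of_int \<lfloor>a\<rfloor>" unfolding kd using a0 by simp
  have kle: "real k \<le> a" unfolding kr by simp
  have kge: "real k \<ge> a - 1" unfolding kr using floor_correct[of a] by linarith
  have Cs: "C \<le> s" unfolding C_def s_def using \<xi>1 n0 L0
    by (intro real_sqrt_le_mono) (simp add: mult_le_cancel_right1 mult_right_le_one_le)
  have "C \<ge> sqrt (n * L / 2)" unfolding C_def using \<xi>1 n0 L0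
    by (intro real_sqrt_le_mono) (simp add: field_simps mult_right_mono)
  then have a2: "a \<ge> 2" using c2 e1 unfolding a_def L_def by (smt (verit) mult_left_mono)
  have as: "a \<le> s" unfolding a_def using Cs C0 e e1 by (smt (verit) mult_left_le_one_le)
  have ks: "real k \<le> s" using kle as by simp
  have k0: "real k \<ge> 0" by simp
  have k4: "4 * k \<le> card (carrier G)"
  proof -
    have "real (4 * k) \<le> n" using ks c1 unfolding s_def L_def by simp
    then show ?thesis unfolding n_def by linarith
  qed
  define t where "t = real k / n"
  define \<kappa> where "\<kappa> = real k ^ 2 / n"
  define \<omega> where "\<omega> = \<kappa> * t * exp (20*t)"
  define \<delta> where "\<delta> = 1 / L"
  have \<delta>0: "\<delta> > 0" unfolding \<delta>_def using L0 by simp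
  have \<kappa>t: "\<kappa> * t \<le> A"
  proof -
    have "\<kappa> * t = real k ^ 3 / n^2" unfolding \<kappa>_def t_def by (simp add: power2_eq_square power3_eq_cube)
    also have "\<dots> \<le> s^3 / n^2" using ks k0 n0 by (intro divide_right_mono power_mono) auto
    finally show ?thesis unfolding A_def s_def L_def .
  qed
  have \<kappa>t0: "\<kappa> * t \<ge> 0" unfolding \<kappa>_def t_def using n0 by simp
  have \<omega>\<Omega>: "\<omega> \<le> \<Omega>"
  proof -
    have "t \<le> s / n" unfolding t_def using ks n0 by (simp add: divide_right_mono)
    then have "exp (20*t) \<le> exp (20 * (sqrt (n * ln n) / n))" unfolding s_def L_def by simp
    then show ?thesis unfolding \<omega>_def \<Omega>_def using \<kappa>t \<kappa>t0 by (intro mult_mono) (auto simp: A_def)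
  qed
  have \<omega>0: "\<omega> \<ge> 0" unfolding \<omega>_def using \<kappa>t0 by simp
  have a2e: "a^2 = (1 - \<epsilon>)^2 * (\<xi> * n * L)" unfolding a_def using CC by (simp add: power_mult_distrib)
  have "real k ^ 2 \<le> a^2" using kle k0 by (intro power_mono) auto
  then have A1: "real k ^ 2 \<le> (1 - \<epsilon>)^2 * (\<xi> * n * L)" using a2e by simp
  have \<kappa>up: "\<kappa> \<le> (1 - \<epsilon>)^2 * \<xi> * L"
  proof -
    have "\<kappa> \<le> (1 - \<epsilon>)^2 * (\<xi> * n * L) / n" unfolding \<kappa>_def by (rule divide_right_mono[OF A1]) (use n0 in simp)
    also have "\<dots> = (1 - \<epsilon>)^2 * \<xi> * L" using n0 by (simp add: field_simps)
    finally show ?thesis .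
  qed
  have e2: "(1 - \<epsilon>)^2 \<le> 1" using e e1 by (simp add: power_le_one)
  have \<kappa>L: "\<kappa> \<le> L"
  proof -
    have "(1 - \<epsilon>)^2 * \<xi> \<le> 1 * 1" using e2 \<xi>1 by (intro mult_mono) auto
    then have "(1 - \<epsilon>)^2 * \<xi> * L \<le> L" using L0 by (simp add: mult_le_cancel_right1)
    then show ?thesis using \<kappa>up by simp
  qed
  have \<kappa>0: "\<kappa> \<ge> 0" unfolding \<kappa>_def using n0 by simp
  have \<kappa>lo: "\<kappa> \<ge> \<gamma> * L"
  proof -
    have "real k \<ge> a / 2" using kge a2 by simp
    then have "real k ^ 2 \<ge> (a/2)^2" using a0 by (intro power_mono) auto
    moreover have "(a/2)^2 \<ge> (1 - \<epsilon>)^2 * (n * L) / 8"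
    proof -
      have "(a/2)^2 = (1 - \<epsilon>)^2 * (\<xi> * n * L) / 4" using a2e by (simp add: power_divide)
      moreover have "(1 - \<epsilon>)^2 * (\<xi> * n * L) \<ge> (1 - \<epsilon>)^2 * ((1/2) * n * L)"
        using \<xi>1 n0 L0 by (intro mult_left_mono mult_right_mono) auto
      ultimately show ?thesis by simp
    qed
    ultimately have B: "real k ^ 2 \<ge> (1 - \<epsilon>)^2 * (n * L) / 8" by simp
    have "\<kappa> \<ge> (1 - \<epsilon>)^2 * (n * L) / 8 / n" unfolding \<kappa>_def by (rule divide_right_mono[OF B]) (use n0 in simp)
    moreover have "(1 - \<epsilon>)^2 * (n * L) / 8 / n = \<gamma> * L" unfolding \<gamma>_def using n0 by (simp add: field_simps)
    ultimately show ?thesis by simp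
  qed
  have gap: "\<xi> * L - \<kappa> \<ge> \<epsilon>/2 * L"
  proof -
    have "\<xi> * L - (1 - \<epsilon>)^2 * \<xi> * L = (\<epsilon> * (2 - \<epsilon>)) * \<xi> * L" by (simp add: algebra_simps power2_eq_square)
    also have "\<dots> \<ge> (\<epsilon> * 1) * (1/2) * L" using e e1 \<xi>1 L0 by (intro mult_right_mono mult_mono) auto
    finally show ?thesis using \<kappa>up by simp
  qed
  have "\<epsilon>/2 * L > 0" using e L0 by simp
  then have small: "\<kappa> \<le> \<xi> * L" using gap by linarith
  have \<mu>M: "(\<Sum>g\<in>carrier G. pr k g) \<ge> M"
  proof -
    have "(\<Sum>g\<in>carrier G. pr k g) \<ge> exp (\<xi> * L - \<kappa> - 9 * (\<kappa> * t))"
      using mu_low[OF n2 k4] small unfolding t_def \<kappa>_def \<xi>_def L_def n_def by simp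
    moreover have "\<xi> * L - \<kappa> - 9 * (\<kappa> * t) \<ge> \<epsilon>/2 * ln n - 9 * A" using gap \<kappa>t unfolding L_def by simp
    ultimately show ?thesis unfolding M_def by (meson exp_le_cancel_iff order_trans)
  qed
  have M0: "M > 0" unfolding M_def by simp
  define \<eta> where "\<eta> = 96 * \<omega> + 18 * (\<kappa> * t) + 2 * \<delta>"
  define \<beta> where "\<beta> = exp (- \<kappa> / 2 + 96 * \<omega> + 9 * (\<kappa> * t))"
  define \<mu> where "\<mu> = (\<Sum>g\<in>carrier G. pr k g)"
  have lb: "Pcov G k \<le> 1/\<mu> + (exp \<eta> - 1) + (\<kappa>/\<delta>) * \<beta> / \<mu>"
    using low_bound(2)[OF \<delta>0 k4] unfolding \<eta>_def \<beta>_def \<mu>_def \<omega>_def t_def \<kappa>_def n_def .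
  have \<mu>M': "\<mu> \<ge> M" unfolding \<mu>_def by (rule \<mu>M)
  have "\<eta> \<le> 96*\<Omega> + 18*A + 2/ln n" unfolding \<eta>_def \<delta>_def L_def using \<omega>\<Omega> \<kappa>t by simp
  then have t2: "exp \<eta> - 1 \<le> exp (96*\<Omega> + 18*A + 2/ln n) - 1" by simp
  have Y: "(\<kappa>/\<delta>) * \<beta> \<le> (ln n)^2 * exp (-(\<gamma>/2) * ln n) * exp (96*\<Omega> + 9*A)"
  proof -
    have "\<kappa>/\<delta> = \<kappa> * L" unfolding \<delta>_def by simp
    also have "\<dots> \<le> L * L" using \<kappa>L L0 by (intro mult_right_mono) auto
    finally have p1: "\<kappa>/\<delta> \<le> (ln n)^2" unfolding L_def by (simp add: power2_eq_square)
    have "- \<kappa> / 2 + 96 * \<omega> + 9 * (\<kappa> * t) \<le> -(\<gamma>/2) * ln n + (96*\<Omega> + 9*A)"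
      using \<kappa>lo \<omega>\<Omega> \<kappa>t unfolding L_def by simp
    then have "\<beta> \<le> exp (-(\<gamma>/2) * ln n + (96*\<Omega> + 9*A))" unfolding \<beta>_def by simp
    also have "\<dots> = exp (-(\<gamma>/2) * ln n) * exp (96*\<Omega> + 9*A)" by (simp only: exp_add)
    finally have p2: "\<beta> \<le> exp (-(\<gamma>/2) * ln n) * exp (96*\<Omega> + 9*A)" .
    have "\<kappa>/\<delta> \<ge> 0" using \<kappa>0 \<delta>0 by simp
    moreover have "\<beta> \<ge> 0" unfolding \<beta>_def by simp
    ultimately have "(\<kappa>/\<delta>) * \<beta> \<le> (ln n)^2 * (exp (-(\<gamma>/2) * ln n) * exp (96*\<Omega> + 9*A))"
      using mult_mono[OF p1 p2] by simp
    then show ?thesis by (simp only: mult.assoc)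
  qed
  have Y0: "(\<kappa>/\<delta>) * \<beta> \<ge> 0" using \<kappa>0 \<delta>0 unfolding \<beta>_def by simp
  have t1: "1/\<mu> \<le> 1/M" using \<mu>M' M0 by (simp add: frac_le)
  have t3: "(\<kappa>/\<delta>) * \<beta> / \<mu> \<le> (ln n)^2 * exp (-(\<gamma>/2) * ln n) * exp (96*\<Omega> + 9*A) / M"
  proof -
    have "(\<kappa>/\<delta>) * \<beta> / \<mu> \<le> (\<kappa>/\<delta>) * \<beta> / M" by (rule divide_left_mono[OF \<mu>M' Y0]) (use M0 \<mu>M' in simp)
    also have "\<dots> \<le> (ln n)^2 * exp (-(\<gamma>/2) * ln n) * exp (96*\<Omega> + 9*A) / M"
      by (rule divide_right_mono[OF Y]) (use M0 in simp)
    finally show ?thesis .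
  qed
  show ?thesis using lb t1 t2 t3 by linarith
qed

lemma R1: fixes e::real assumes "e>0" shows "((\<lambda>y::real. ((1+e)* sqrt(y*ln y)+1)^3/y^2) \<longlongrightarrow> 0) at_top"
  using assms by real_asymp
lemma R2: fixes e::real assumes "e>0" shows "((\<lambda>y::real. ((1+e)* sqrt(y*ln y)+1)/y) \<longlongrightarrow> 0) at_top"
  using assms by real_asymp
lemma R3: fixes e::real assumes "e>0" shows "((\<lambda>y::real. exp (- e * ln y)) \<longlongrightarrow> 0) at_top"
  using assms by real_asymp
lemma R4: "((\<lambda>y::real. sqrt(y*ln y)^3/y^2) \<longlongrightarrow> 0) at_top" by real_asymp
lemma R5: "((\<lambda>y::real. sqrt(y*ln y)/y) \<longlongrightarrow> 0) at_top" by real_asymp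
lemma R6: "((\<lambda>y::real. 2 / ln y) \<longlongrightarrow> 0) at_top" by real_asymp
lemma R8: fixes g::real assumes "g>0" shows "((\<lambda>y::real. ln y ^2 * exp (-(g/2) * ln y)) \<longlongrightarrow> 0) at_top"
  using assms by real_asymp
lemma E1: "eventually (\<lambda>y::real. y \<ge> 2) at_top" by real_asymp
lemma E2: "eventually (\<lambda>y::real. 4* sqrt(y * ln y) \<le> y) at_top" by real_asymp
lemma E3: fixes e::real assumes "e>0" "e<1" shows "eventually (\<lambda>y::real. (1-e)* sqrt(y*ln y/2) \<ge> 2) at_top"
  using assms by real_asymp

lemma inv_exp_diff: "1 / exp (a - b) = exp (- a) * exp (b :: real)"
  by (simp add: exp_diff exp_minus field_simps)

theorem theorem1p1:
  fixes G :: "nat \<Rightarrow> 'a monoid" and \<epsilon> :: real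
  assumes "\<And>n. group (G n)"
    and "\<And>n. finite (carrier (G n))"
    and "filterlim (\<lambda>n. card (carrier (G n))) at_top sequentially"
    and "\<epsilon> > 0"
  shows "(\<lambda>n. Pcov (G n) (nat \<lceil>(1 + \<epsilon>) * sqrt (Theta (G n) * real (card (carrier (G n))) * ln (real (card (carrier (G n)))))\<rceil>)) \<longlonglongrightarrow> 1 \<and>
     (\<lambda>n. Pcov (G n) (nat \<lfloor>(1 - \<epsilon>) * sqrt (Theta (G n) * real (card (carrier (G n))) * ln (real (card (carrier (G n)))))\<rfloor>)) \<longlonglongrightarrow> 0"
proof -
  note grp = assms(1) and fin = assms(2) and e = assms(4)
  define x where "x j = real (card (carrier (G j)))" for j
  have xlim: "filterlim x at_top sequentially"
    unfolding x_def using filterlim_compose[OF filterlim_real_sequentially assms(3)] .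
  have ev2: "eventually (\<lambda>j. x j \<ge> 2) sequentially" by (rule eventually_compose_filterlim[OF E1 xlim])
  have Pge0: "Pcov (G j) k \<ge> 0" for j k
    using fgrp.Pcov_ge0[of "G j"] grp fin by (simp add: fgrp_def fgrp_axioms_def)
  have Ple1: "Pcov (G j) k \<le> 1" for j k
    using fgrp.Pcov_le1[of "G j"] grp fin by (simp add: fgrp_def fgrp_axioms_def)
  define K where "K y = (1 + \<epsilon>) * sqrt (y * ln y) + 1" for y :: real
  define f1 where "f1 y = exp (10 * (K y^3 / y^2 * exp (20 * (K y / y)))) * exp (- \<epsilon> * ln y)" for y :: real
  have f1lim: "(f1 \<longlongrightarrow> 0) at_top"
  proof -
    have "((\<lambda>y. exp (10 * (K y^3 / y^2 * exp (20 * (K y / y)))) * exp (- \<epsilon> * ln y)) \<longlongrightarrow> exp (10 * (0 * exp (20 * 0))) * 0) at_top"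
      unfolding K_def by (intro tendsto_intros R1 R2 R3 e)
    then show ?thesis unfolding f1_def by simp
  qed
  have P1: "(\<lambda>n. Pcov (G n) (nat \<lceil>(1 + \<epsilon>) * sqrt (Theta (G n) * real (card (carrier (G n))) * ln (real (card (carrier (G n)))))\<rceil>)) \<longlonglongrightarrow> 1"
  proof (rule tendsto_sandwich[where f="\<lambda>j. 1 - f1 (x j)" and h="\<lambda>j. 1"])
    show "eventually (\<lambda>j. 1 - f1 (x j) \<le> Pcov (G j) (nat \<lceil>(1 + \<epsilon>) * sqrt (Theta (G j) * real (card (carrier (G j))) * ln (real (card (carrier (G j)))))\<rceil>)) sequentially"
      using ev2
    proof eventually_elim
      case (elim j)
      have n2: "card (carrier (G j)) \<ge> 2" using elim unfolding x_def by simp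
      have "1 - Pcov (G j) (nat \<lceil>(1 + \<epsilon>) * sqrt (Theta (G j) * real (card (carrier (G j))) * ln (real (card (carrier (G j)))))\<rceil>)
          \<le> exp (10 * (K (x j)^3 / (x j)^2 * exp (20 * (K (x j) / x j))) - \<epsilon> * ln (x j))"
        using part1_bound[OF grp fin n2 e] unfolding K_def x_def .
      also have "\<dots> = f1 (x j)" unfolding f1_def by (simp add: exp_diff exp_minus field_simps)
      finally show ?case by simp
    qed
    show "eventually (\<lambda>j. Pcov (G j) (nat \<lceil>(1 + \<epsilon>) * sqrt (Theta (G j) * real (card (carrier (G j))) * ln (real (card (carrier (G j)))))\<rceil>) \<le> 1) sequentially"
      using Ple1 by simp
    have "((\<lambda>j. f1 (x j)) \<longlongrightarrow> 0) sequentially" by (rule filterlim_compose[OF f1lim xlim])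
    then show "(\<lambda>j. 1 - f1 (x j)) \<longlonglongrightarrow> 1" using tendsto_diff[OF tendsto_const, of _ 0 _ 1] by simp
    show "(\<lambda>j. 1::real) \<longlonglongrightarrow> 1" by simp
  qed
  have P2: "(\<lambda>n. Pcov (G n) (nat \<lfloor>(1 - \<epsilon>) * sqrt (Theta (G n) * real (card (carrier (G n))) * ln (real (card (carrier (G n)))))\<rfloor>)) \<longlonglongrightarrow> 0"
  proof (cases "\<epsilon> < 1")
    case False
    have "eventually (\<lambda>j. Pcov (G j) (nat \<lfloor>(1 - \<epsilon>) * sqrt (Theta (G j) * real (card (carrier (G j))) * ln (real (card (carrier (G j)))))\<rfloor>) = 0) sequentially"
      using ev2
    proof eventually_elim
      case (elim j)
      have n2: "card (carrier (G j)) \<ge> 2" using elim unfolding x_def by simp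
      have th: "1/2 \<le> Theta (G j)" using fgrp.theta_prop(1)[of "G j", OF _ n2] grp fin by (simp add: fgrp_def fgrp_axioms_def)
      have "0 \<le> Theta (G j) * real (card (carrier (G j))) * ln (real (card (carrier (G j))))"
        using th n2 by simp
      then have "(1 - \<epsilon>) * sqrt (Theta (G j) * real (card (carrier (G j))) * ln (real (card (carrier (G j))))) \<le> 0"
        using False by (intro mult_nonpos_nonneg) auto
      then have "nat \<lfloor>(1 - \<epsilon>) * sqrt (Theta (G j) * real (card (carrier (G j))) * ln (real (card (carrier (G j)))))\<rfloor> = 0"
        by linarith
      moreover have "Pcov (G j) 0 = 0"
        using fgrp.Pcov_zero[of "G j"] grp fin by (simp add: fgrp_def fgrp_axioms_def)
      ultimately show ?case by simp
    qed
    then show ?thesis by (rule tendsto_eventually)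
  next
    case True
    define A where "A y = sqrt (y * ln y)^3 / y^2" for y :: real
    define \<Omega> where "\<Omega> y = A y * exp (20 * (sqrt (y * ln y) / y))" for y :: real
    define \<gamma> where "\<gamma> = (1 - \<epsilon>)^2 / 8"
    define M where "M y = exp (\<epsilon>/2 * ln y - 9 * A y)" for y :: real
    define f2 where "f2 y = 1/M y + (exp (96*\<Omega> y + 18*A y + 2/ln y) - 1) + (ln y)^2 * exp (-(\<gamma>/2) * ln y) * exp (96*\<Omega> y + 9*A y) / M y" for y :: real
    have g0: "\<gamma> > 0" unfolding \<gamma>_def using True by simp
    have Alim: "(A \<longlongrightarrow> 0) at_top" unfolding A_def by (rule R4)
    have \<Omega>lim: "(\<Omega> \<longlongrightarrow> 0) at_top"
    proof -
      have "((\<lambda>y. A y * exp (20 * (sqrt (y * ln y) / y))) \<longlongrightarrow> 0 * exp (20 * 0)) at_top"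
        by (intro tendsto_intros Alim R5)
      then show ?thesis unfolding \<Omega>_def by simp
    qed
    have Minv: "1 / M y = exp (- (\<epsilon>/2 * ln y)) * exp (9 * A y)" for y
      unfolding M_def by (rule inv_exp_diff)
    have Minvlim: "((\<lambda>y. 1 / M y) \<longlongrightarrow> 0) at_top"
    proof -
      have "((\<lambda>y. exp (- (\<epsilon>/2) * ln y) * exp (9 * A y)) \<longlongrightarrow> 0 * exp (9 * 0)) at_top"
        by (intro tendsto_intros R3 Alim) (use e in simp)
      then show ?thesis unfolding Minv by simp
    qed
    have f2lim: "(f2 \<longlongrightarrow> 0) at_top"
    proof -
      have "((\<lambda>y. 1/M y + (exp (96*\<Omega> y + 18*A y + 2/ln y) - 1) + ((ln y)^2 * exp (-(\<gamma>/2) * ln y)) * exp (96*\<Omega> y + 9*A y) * (1 / M y))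
          \<longlongrightarrow> 0 + (exp (96*0 + 18*0 + 0) - 1) + 0 * exp (96*0 + 9*0) * 0) at_top"
        by (intro tendsto_intros Minvlim \<Omega>lim Alim R6 R8 g0)
      then show ?thesis unfolding f2_def by simp
    qed
    show ?thesis
    proof (rule tendsto_sandwich[where f="\<lambda>j. 0" and h="\<lambda>j. f2 (x j)"])
      show "eventually (\<lambda>j. (0::real) \<le> Pcov (G j) (nat \<lfloor>(1 - \<epsilon>) * sqrt (Theta (G j) * real (card (carrier (G j))) * ln (real (card (carrier (G j)))))\<rfloor>)) sequentially"
        using Pge0 by simp
      have ev: "eventually (\<lambda>j. x j \<ge> 2 \<and> 4* sqrt(x j * ln (x j)) \<le> x j \<and> (1-\<epsilon>)* sqrt(x j*ln (x j)/2) \<ge> 2) sequentially"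
        using ev2 eventually_compose_filterlim[OF E2 xlim] eventually_compose_filterlim[OF E3[OF e True] xlim]
        by eventually_elim auto
      show "eventually (\<lambda>j. Pcov (G j) (nat \<lfloor>(1 - \<epsilon>) * sqrt (Theta (G j) * real (card (carrier (G j))) * ln (real (card (carrier (G j)))))\<rfloor>) \<le> f2 (x j)) sequentially"
        using ev
      proof eventually_elim
        case (elim j)
        have n2: "card (carrier (G j)) \<ge> 2" using elim unfolding x_def by simp
        show ?case using part2_bound[OF grp fin n2 e True] elim
          unfolding f2_def M_def \<Omega>_def A_def \<gamma>_def x_def by simp
      qed
      show "(\<lambda>j. 0::real) \<longlonglongrightarrow> 0" by simp
      show "(\<lambda>j. f2 (x j)) \<longlonglongrightarrow> 0" by (rule filterlim_compose[OF f2lim xlim])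
    qed
  qed
  show ?thesis using P1 P2 by simp
qed

end
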